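(* Let $a,b:\mathbb{R}\to\mathbb{R}$ be positive even $C^1$ functions with $a^{-1},b\in L^1(\mathbb{R})$, and let $G\in C^2(\mathbb{R})$ be nonnegative and even, such that for some $M>0$, $G'(s)\le0$ for $s<-M$ and $G'(s)\ge0$ for $s>M$. If $$\frac{1}{16\,\|a^{-1}\|_{L^1(\mathbb{R})}\,\|b\|_{L^1(\mathbb{R})}}\ge -G''(0)>-G''(s)\quad\text{for all } s\ne0,$$ then for every $L>0$ and every $m>0$ the functional $\mathcal{E}(\cdot,(-L,L))$ admits a unique critical point in $H^1_m((-L,L))$.
   Context: $H^1_m((-L,L)):=\{u\in H^1((-L,L)):u(-L)=-m,\ u(L)=m\}$ and $\mathcal{E}(u,(-L,L)):=\int_{-L}^L\{\tfrac12(u')^2a(x)+G(u)b(x)\}\,dx$. A critical point is a weak solution in $H^1_m((-L,L))$ of $-(au')'+bG'(u)=0$. *)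

theory Defs
  imports "HOL-Analysis.Analysis"
begin

text \<open>H^1 on (-L,L) in one dimension: u (its continuous representative on [-L,L])
  is the integral of an L^2 function v, the weak derivative of u.\<close>
definition H1_deriv :: "real \<Rightarrow> (real \<Rightarrow> real) \<Rightarrow> (real \<Rightarrow> real) \<Rightarrow> bool" where
  "H1_deriv L u v \<longleftrightarrow>
     v integrable_on {-L..L} \<and> (\<lambda>x. (v x)\<^sup>2) integrable_on {-L..L} \<and>
     (\<forall>x\<in>{-L..L}. (v has_integral (u x - u (-L))) {-L..x})"

definition H1 :: "real \<Rightarrow> (real \<Rightarrow> real) \<Rightarrow> bool" where
  "H1 L u \<longleftrightarrow> (\<exists>v. H1_deriv L u v)"

definition H1m :: "real \<Rightarrow> real \<Rightarrow> (real \<Rightarrow> real) \<Rightarrow> bool" where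
  "H1m L m u \<longleftrightarrow> H1 L u \<and> u (-L) = -m \<and> u L = m"

definition energy :: "(real \<Rightarrow> real) \<Rightarrow> (real \<Rightarrow> real) \<Rightarrow> (real \<Rightarrow> real) \<Rightarrow> real
    \<Rightarrow> (real \<Rightarrow> real) \<Rightarrow> (real \<Rightarrow> real) \<Rightarrow> real" where
  "energy a b G L u u' = integral {-L..L} (\<lambda>x. (u' x)\<^sup>2 / 2 * a x + G (u x) * b x)"

text \<open>Critical point of the energy: a weak solution in H^1_m of -(a u')' + b G'(u) = 0,
  tested against all H^1_0 functions.\<close>
definition critical_point :: "(real \<Rightarrow> real) \<Rightarrow> (real \<Rightarrow> real) \<Rightarrow> (real \<Rightarrow> real) \<Rightarrow> real
    \<Rightarrow> real \<Rightarrow> (real \<Rightarrow> real) \<Rightarrow> bool" where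
  "critical_point a b G L m u \<longleftrightarrow> H1m L m u \<and>
     (\<exists>v. H1_deriv L u v \<and>
        (\<forall>\<phi> \<psi>. H1_deriv L \<phi> \<psi> \<and> \<phi> (-L) = 0 \<and> \<phi> L = 0 \<longrightarrow>
           ((\<lambda>x. a x * v x * \<psi> x + b x * deriv G (u x) * \<phi> x) has_integral 0) {-L..L}))"

end

theory Submission
  imports Defs "HOL-Analysis.Analysis"
begin

lemma abs_int_from_sq:
  fixes \<psi> :: "real \<Rightarrow> real"
  assumes "\<psi> integrable_on {a..b}" "(\<lambda>x. (\<psi> x)\<^sup>2) integrable_on {a..b}"
  shows "\<psi> absolutely_integrable_on {a..b}"
proof (rule measurable_bounded_by_integrable_imp_absolutely_integrable)
  show "\<psi> \<in> borel_measurable (lebesgue_on {a..b})"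
    using assms(1) integrable_imp_measurable by blast
  show "(\<lambda>x. (1 + (\<psi> x)\<^sup>2) / 2) integrable_on {a..b}"
    using assms(2) by (intro integrable_on_divide integrable_add) auto
  show "norm (\<psi> x) \<le> (1 + (\<psi> x)\<^sup>2) / 2" for x
  proof -
    have "0 \<le> (\<bar>\<psi> x\<bar> - 1)\<^sup>2" by simp
    then show ?thesis by (simp add: power2_eq_square algebra_simps abs_mult_self_eq)
  qed
qed auto

lemma abs_int_cont_mult:
  fixes \<psi> k :: "real \<Rightarrow> real"
  assumes "\<psi> absolutely_integrable_on {a..b}" "continuous_on {a..b} k"
  shows "(\<lambda>x. k x * \<psi> x) absolutely_integrable_on {a..b}"
  apply (rule absolutely_integrable_bounded_measurable_product_real)
  using assms by (auto intro: continuous_imp_measurable_on_sets_lebesgue compact_imp_bounded compact_continuous_image)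

lemma hk_abs_bound:
  fixes f g :: "real \<Rightarrow> real"
  assumes "f integrable_on S" "g integrable_on S" "\<And>x. x \<in> S \<Longrightarrow> \<bar>f x\<bar> \<le> g x"
  shows "\<bar>integral S f\<bar> \<le> integral S g"
  using integral_norm_bound_integral[OF assms(1,2)] assms(3) by simp

lemma ibp_indef:
  fixes f F \<psi> \<phi> :: "real \<Rightarrow> real"
  assumes ab: "\<alpha> \<le> \<beta>" and fc: "continuous_on {\<alpha>..\<beta>} f"
    and Fdef: "\<And>x. x \<in> {\<alpha>..\<beta>} \<Longrightarrow> F x = integral {\<alpha>..x} f"
    and psi: "\<psi> absolutely_integrable_on {\<alpha>..\<beta>}"
    and phidef: "\<And>x. x \<in> {\<alpha>..\<beta>} \<Longrightarrow> \<phi> x = integral {\<alpha>..x} \<psi>"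
  shows "((\<lambda>x. F x * \<psi> x + f x * \<phi> x) has_integral F \<beta> * \<phi> \<beta>) {\<alpha>..\<beta>}"
proof -
  define S where "S = {\<alpha>..\<beta>}"
  have fint: "f integrable_on {y..z}" if "{y..z} \<subseteq> S" for y z
    using integrable_continuous_real[OF fc] integrable_subinterval_real that S_def by blast
  obtain Cf where Cf: "\<And>x. x \<in> S \<Longrightarrow> \<bar>f x\<bar> \<le> Cf"
    using compact_imp_bounded[OF compact_continuous_image[OF fc]] unfolding S_def bounded_iff by fastforce
  have Fder: "(F has_real_derivative f x) (at x within S)" if "x \<in> S" for x
  proof -
    have "((\<lambda>x. integral {\<alpha>..x} f) has_real_derivative f x) (at x within S)"
      using integral_has_real_derivative[OF fc] that S_def by auto
    then show ?thesis
      by (rule has_field_derivative_transform_within[where d=1]) (use that Fdef S_def in auto)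
  qed
  have Fcont: "continuous_on S F"
    using Fder by (meson DERIV_continuous continuous_on_eq_continuous_within)
  have FLip: "\<bar>F z - F x\<bar> \<le> Cf * \<bar>z - x\<bar>" if "x \<in> S" "z \<in> S" for x z
  proof -
    have *: "\<bar>F z - F x\<bar> \<le> Cf * (z - x)" if "x \<in> S" "z \<in> S" "x \<le> z" for x z
    proof -
      have "F z - F x = integral {x..z} f"
        using Fdef that Henstock_Kurzweil_Integration.integral_combine[where a=\<alpha> and c=x and b=z and f=f] fint[of \<alpha> z] S_def by auto
      also have "\<bar>\<dots>\<bar> \<le> integral {x..z} (\<lambda>_. Cf)"
        using that S_def by (intro hk_abs_bound fint) (auto intro!: Cf)
      also have "\<dots> = Cf * (z - x)" using that by simp
      finally show ?thesis .
    qed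
    show ?thesis
    proof (cases "x \<le> z")
      case True then show ?thesis using *[OF that True] by simp
    next
      case False then show ?thesis using *[OF that(2,1)] by (simp add: abs_minus_commute)
    qed
  qed
  have Cf0: "0 \<le> Cf" using Cf[of \<alpha>] ab S_def by auto
  have psiint: "\<psi> integrable_on {y..z}" if "{y..z} \<subseteq> S" for y z
    using psi integrable_subinterval_real that S_def set_lebesgue_integral_eq_integral(1)
    unfolding absolutely_integrable_on_def by blast
  have apsi: "(\<lambda>x. \<bar>\<psi> x\<bar>) integrable_on S"
    using psi S_def absolutely_integrable_on_iff_nonneg by (auto simp: absolutely_integrable_on_def)
  have apsiint: "(\<lambda>x. \<bar>\<psi> x\<bar>) integrable_on {y..z}" if "{y..z} \<subseteq> S" for y z
    using apsi integrable_subinterval_real that S_def by blast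
  have Fpsi: "(\<lambda>x. F x * \<psi> x) integrable_on S"
    using abs_int_cont_mult[OF psi, of F] Fcont S_def set_lebesgue_integral_eq_integral(1)
    unfolding absolutely_integrable_on_def by blast
  have Fpsiint: "(\<lambda>x. F x * \<psi> x) integrable_on {y..z}" if "{y..z} \<subseteq> S" for y z
    using Fpsi integrable_subinterval_real that S_def by blast
  define \<Psi> where "\<Psi> x = integral {\<alpha>..x} (\<lambda>x. \<bar>\<psi> x\<bar>)" for x
  have Psicont: "continuous_on S \<Psi>"
    unfolding \<Psi>_def S_def by (rule indefinite_integral_continuous_1) (use apsi S_def in auto)
  define Q where "Q z = F z * \<phi> z - integral {\<alpha>..z} (\<lambda>x. F x * \<psi> x)" for z
  have phidiff: "\<bar>\<phi> z - \<phi> y\<bar> \<le> \<Psi> z - \<Psi> y" if "y \<in> S" "z \<in> S" "y \<le> z" for y z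
  proof -
    have "\<phi> z - \<phi> y = integral {y..z} \<psi>"
      using Henstock_Kurzweil_Integration.integral_combine[where a=\<alpha> and c=y and b=z and f=\<psi>]
        psiint[of \<alpha> z] phidef that S_def by auto
    moreover have "\<Psi> z - \<Psi> y = integral {y..z} (\<lambda>x. \<bar>\<psi> x\<bar>)"
      using Henstock_Kurzweil_Integration.integral_combine[where a=\<alpha> and c=y and b=z and f="\<lambda>x. \<bar>\<psi> x\<bar>"]
        apsiint[of \<alpha> z] \<Psi>_def that S_def by auto
    moreover have "\<bar>integral {y..z} \<psi>\<bar> \<le> integral {y..z} (\<lambda>x. \<bar>\<psi> x\<bar>)"
      by (rule hk_abs_bound) (use psiint apsiint that S_def in auto)
    ultimately show ?thesis by simp
  qed
  have Ebound: "\<bar>Q z - Q z0 - (F z - F z0) * \<phi> z0\<bar> \<le> 2 * Cf * \<bar>z - z0\<bar> * \<bar>\<Psi> z - \<Psi> z0\<bar>"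
    if z0S: "z0 \<in> S" and zS: "z \<in> S" for z z0
  proof -
    have *: "\<bar>Q z - Q z0 - (F z - F z0) * \<phi> z0\<bar> \<le> Cf * (z - z0) * (\<Psi> z - \<Psi> z0)"
      if z0S: "z0 \<in> S" and zS: "z \<in> S" and le: "z0 \<le> z" for z z0
    proof -
      have sub: "{z0..z} \<subseteq> S" using z0S zS S_def by auto
      have c1: "integral {\<alpha>..z} h = integral {\<alpha>..z0} h + integral {z0..z} h"
        if "h integrable_on {\<alpha>..z}" for h :: "real \<Rightarrow> real"
        using Henstock_Kurzweil_Integration.integral_combine[where a=\<alpha> and c=z0 and b=z and f=h] that z0S le S_def by auto
      have e1: "\<phi> z - \<phi> z0 = integral {z0..z} \<psi>"
        using phidef z0S zS c1[of \<psi>] psiint[of \<alpha> z] S_def by auto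
      have e2: "integral {\<alpha>..z} (\<lambda>x. F x * \<psi> x) - integral {\<alpha>..z0} (\<lambda>x. F x * \<psi> x)
           = integral {z0..z} (\<lambda>x. F x * \<psi> x)"
        using c1 Fpsiint[of \<alpha> z] zS S_def by auto
      have "Q z - Q z0 - (F z - F z0) * \<phi> z0 = F z * (\<phi> z - \<phi> z0)
           - (integral {\<alpha>..z} (\<lambda>x. F x * \<psi> x) - integral {\<alpha>..z0} (\<lambda>x. F x * \<psi> x))"
        unfolding Q_def by (simp add: algebra_simps)
      also have "\<dots> = integral {z0..z} (\<lambda>x. F z * \<psi> x) - integral {z0..z} (\<lambda>x. F x * \<psi> x)"
        using e1 e2 by simp
      also have "\<dots> = integral {z0..z} (\<lambda>x. (F z - F x) * \<psi> x)"
        using psiint[OF sub] Fpsiint[OF sub]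
        by (simp add: left_diff_distrib integral_diff[symmetric] integrable_on_mult_right del: integral_mult_right)
      also have "\<bar>\<dots>\<bar> \<le> integral {z0..z} (\<lambda>x. Cf * (z - z0) * \<bar>\<psi> x\<bar>)"
      proof (rule hk_abs_bound)
        show "(\<lambda>x. (F z - F x) * \<psi> x) integrable_on {z0..z}"
          using psiint[OF sub] Fpsiint[OF sub]
          by (simp add: left_diff_distrib integrable_diff integrable_on_mult_right)
        show "(\<lambda>x. Cf * (z - z0) * \<bar>\<psi> x\<bar>) integrable_on {z0..z}"
          using apsiint[OF sub] by (intro integrable_on_mult_right)
        show "\<bar>(F z - F x) * \<psi> x\<bar> \<le> Cf * (z - z0) * \<bar>\<psi> x\<bar>" if "x \<in> {z0..z}" for x
        proof -
          have "\<bar>F z - F x\<bar> \<le> Cf * (z - z0)"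
          proof -
            have "x \<in> S" using that sub by auto
            then have "\<bar>F z - F x\<bar> \<le> Cf * (z - x)" using FLip[of x z] zS that by simp
            also have "\<dots> \<le> Cf * (z - z0)" using that Cf0 by (intro mult_left_mono) auto
            finally show ?thesis .
          qed
          then show ?thesis by (simp add: abs_mult mult_right_mono)
        qed
      qed
      also have "\<dots> = Cf * (z - z0) * (\<Psi> z - \<Psi> z0)"
        using c1[of "\<lambda>x. \<bar>\<psi> x\<bar>"] apsiint[of \<alpha> z] zS S_def \<Psi>_def by auto
      finally show ?thesis .
    qed
    show ?thesis
    proof (cases "z0 \<le> z")
      case True
      have "0 \<le> \<Psi> z - \<Psi> z0" using phidiff[OF z0S zS True] by linarith
      then have "Cf * (z - z0) * (\<Psi> z - \<Psi> z0) \<le> 2 * Cf * \<bar>z - z0\<bar> * \<bar>\<Psi> z - \<Psi> z0\<bar>"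
        using True Cf0 by (simp add: mult_right_mono mult_left_mono)
      then show ?thesis using *[OF z0S zS True] by linarith
    next
      case False
      then have le: "z \<le> z0" by simp
      have p: "\<bar>\<phi> z0 - \<phi> z\<bar> \<le> \<Psi> z0 - \<Psi> z" using phidiff[OF zS z0S le] .
      have A: "\<bar>Q z0 - Q z - (F z0 - F z) * \<phi> z\<bar> \<le> Cf * (z0 - z) * (\<Psi> z0 - \<Psi> z)"
        using *[OF zS z0S le] .
      have B: "\<bar>(F z0 - F z) * (\<phi> z0 - \<phi> z)\<bar> \<le> Cf * (z0 - z) * (\<Psi> z0 - \<Psi> z)"
      proof -
        have "\<bar>F z0 - F z\<bar> \<le> Cf * (z0 - z)" using FLip[OF zS z0S] le by simp
        then show ?thesis unfolding abs_mult using p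
          by (intro mult_mono) auto
      qed
      have "Q z - Q z0 - (F z - F z0) * \<phi> z0 = - (Q z0 - Q z - (F z0 - F z) * \<phi> z)
          + (F z0 - F z) * (\<phi> z0 - \<phi> z)" by (simp add: algebra_simps)
      then have "\<bar>Q z - Q z0 - (F z - F z0) * \<phi> z0\<bar> \<le> 2 * (Cf * (z0 - z) * (\<Psi> z0 - \<Psi> z))"
        using A B by linarith
      also have "\<dots> = 2 * Cf * \<bar>z - z0\<bar> * \<bar>\<Psi> z - \<Psi> z0\<bar>"
      proof -
        have "0 \<le> \<Psi> z0 - \<Psi> z" using p by linarith
        then show ?thesis using le by (simp add: abs_of_nonneg abs_minus_commute[of z] abs_minus_commute[of "\<Psi> z"])
      qed
      finally show ?thesis .
    qed
  qed
  have Qder: "(Q has_real_derivative f z0 * \<phi> z0) (at z0 within S)" if z0S: "z0 \<in> S" for z0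
  proof -
    define E where "E z = Q z - Q z0 - (F z - F z0) * \<phi> z0" for z
    have Qeq: "Q = (\<lambda>z. Q z0 + (F z - F z0) * \<phi> z0 + E z)"
      by (auto simp: E_def)
    have E0: "E z0 = 0" by (simp add: E_def)
    have "(E has_real_derivative 0) (at z0 within S)"
      unfolding has_field_derivative_iff
    proof (rule Lim_null_comparison)
      show "\<forall>\<^sub>F z in at z0 within S. norm ((E z - E z0) / (z - z0)) \<le> 2 * Cf * \<bar>\<Psi> z - \<Psi> z0\<bar>"
        unfolding eventually_at
      proof (intro exI[of _ 1] conjI ballI impI)
        fix z assume zS: "z \<in> S" and "z \<noteq> z0 \<and> dist z z0 < 1"
        then have ne: "z \<noteq> z0" by auto
        have "\<bar>E z\<bar> \<le> 2 * Cf * \<bar>z - z0\<bar> * \<bar>\<Psi> z - \<Psi> z0\<bar>"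
          using Ebound[OF z0S zS] unfolding E_def .
        then have "\<bar>E z\<bar> / \<bar>z - z0\<bar> \<le> 2 * Cf * \<bar>\<Psi> z - \<Psi> z0\<bar>"
          using ne by (simp add: divide_le_eq algebra_simps)
        then show "norm ((E z - E z0) / (z - z0)) \<le> 2 * Cf * \<bar>\<Psi> z - \<Psi> z0\<bar>"
          using E0 by (simp add: abs_divide)
      qed simp
      show "((\<lambda>z. 2 * Cf * \<bar>\<Psi> z - \<Psi> z0\<bar>) \<longlongrightarrow> 0) (at z0 within S)"
      proof -
        have "(\<Psi> \<longlongrightarrow> \<Psi> z0) (at z0 within S)"
          using Psicont z0S continuous_on_def by blast
        then have "((\<lambda>z. \<Psi> z - \<Psi> z0) \<longlongrightarrow> 0) (at z0 within S)"
          by (simp add: LIM_zero)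
        then have "((\<lambda>z. \<bar>\<Psi> z - \<Psi> z0\<bar>) \<longlongrightarrow> 0) (at z0 within S)"
          using tendsto_rabs_zero by blast
        then show ?thesis using tendsto_mult_right_zero by blast
      qed
    qed
    moreover have "(F has_real_derivative f z0) (at z0 within S)" using Fder z0S by blast
    ultimately have "((\<lambda>z. Q z0 + (F z - F z0) * \<phi> z0 + E z) has_real_derivative f z0 * \<phi> z0) (at z0 within S)"
      by (auto intro!: derivative_eq_intros)
    then show ?thesis using Qeq by simp
  qed
  have "((\<lambda>z. f z * \<phi> z) has_integral Q \<beta> - Q \<alpha>) {\<alpha>..\<beta>}"
    by (rule fundamental_theorem_of_calculus[OF ab])
      (use Qder S_def in \<open>auto simp: has_real_derivative_iff_has_vector_derivative[symmetric]\<close>)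
  moreover have "Q \<alpha> = 0" using Fdef[of \<alpha>] ab by (simp add: Q_def)
  moreover have "Q \<beta> = F \<beta> * \<phi> \<beta> - integral {\<alpha>..\<beta>} (\<lambda>x. F x * \<psi> x)" by (simp add: Q_def)
  ultimately have "((\<lambda>z. f z * \<phi> z) has_integral F \<beta> * \<phi> \<beta> - integral {\<alpha>..\<beta>} (\<lambda>x. F x * \<psi> x)) {\<alpha>..\<beta>}"
    by simp
  from has_integral_add[OF integrable_integral[OF Fpsi[unfolded S_def]] this]
  show ?thesis by simp
qed

lemma H1_deriv_cont:
  assumes "H1_deriv L u v" "0 < L"
  shows "continuous_on {-L..L} u"
proof -
  have vi: "v integrable_on {-L..L}" using assms unfolding H1_deriv_def by auto
  have c: "continuous_on {-L..L} (\<lambda>x. u (-L) + integral {-L..x} v)"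
    by (intro continuous_intros indefinite_integral_continuous_1 vi)
  show ?thesis
  proof (rule continuous_on_eq[OF c])
    fix x assume "x \<in> {-L..L}"
    then have "(v has_integral (u x - u (-L))) {-L..x}" using assms unfolding H1_deriv_def by auto
    then show "u (-L) + integral {-L..x} v = u x" by (simp add: integral_unique)
  qed
qed

lemma H1_deriv_abs:
  assumes "H1_deriv L u v"
  shows "v absolutely_integrable_on {-L..L}"
  using assms abs_int_from_sq unfolding H1_deriv_def by blast

lemma sq_prod_integrable:
  fixes v w :: "real \<Rightarrow> real"
  assumes "v integrable_on {a..b}" "(\<lambda>x. (v x)\<^sup>2) integrable_on {a..b}"
    "w integrable_on {a..b}" "(\<lambda>x. (w x)\<^sup>2) integrable_on {a..b}"
  shows "(\<lambda>x. v x * w x) integrable_on {a..b}"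
proof (rule measurable_bounded_by_integrable_imp_integrable)
  show "(\<lambda>x. v x * w x) \<in> borel_measurable (lebesgue_on {a..b})"
    using assms(1,3) integrable_imp_measurable by (intro borel_measurable_times) auto
  show "(\<lambda>x. ((v x)\<^sup>2 + (w x)\<^sup>2) / 2) integrable_on {a..b}"
    using assms by (intro integrable_on_divide integrable_add) auto
  show "norm (v x * w x) \<le> ((v x)\<^sup>2 + (w x)\<^sup>2) / 2" for x
  proof -
    have "0 \<le> (\<bar>v x\<bar> - \<bar>w x\<bar>)\<^sup>2" by simp
    then show ?thesis by (simp add: power2_eq_square algebra_simps abs_mult)
  qed
qed auto

lemma H1_deriv_diff:
  assumes "H1_deriv L u v" "H1_deriv L w z"
  shows "H1_deriv L (\<lambda>x. u x - w x) (\<lambda>x. v x - z x)"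
proof -
  have vw: "(\<lambda>x. v x * z x) integrable_on {-L..L}"
    using assms sq_prod_integrable unfolding H1_deriv_def by blast
  have sq: "(\<lambda>x. (v x - z x)\<^sup>2) = (\<lambda>x. (v x)\<^sup>2 - 2 * (v x * z x) + (z x)\<^sup>2)"
    by (auto simp: power2_eq_square algebra_simps)
  have vw2: "(\<lambda>x. 2 * (v x * z x)) integrable_on {-L..L}"
    using vw by (rule integrable_on_mult_right)
  have A: "(\<lambda>x. v x - z x) integrable_on {-L..L}"
    using assms unfolding H1_deriv_def by (auto intro: integrable_diff)
  have B: "(\<lambda>x. (v x - z x)\<^sup>2) integrable_on {-L..L}"
    unfolding sq using assms vw2 unfolding H1_deriv_def by (intro integrable_add integrable_diff) auto
  have C: "((\<lambda>x. v x - z x) has_integral ((u x - w x) - (u (-L) - w (-L)))) {-L..x}"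
    if "x \<in> {-L..L}" for x
  proof -
    have "((\<lambda>x. v x - z x) has_integral ((u x - u (-L)) - (w x - w (-L)))) {-L..x}"
      using assms that unfolding H1_deriv_def by (intro has_integral_diff) auto
    then show ?thesis by (simp add: algebra_simps)
  qed
  show ?thesis unfolding H1_deriv_def using A B C by auto
qed

lemma phi_bound:
  assumes "H1_deriv L \<phi> \<psi>" "\<phi> (-L) = 0" "\<phi> L = 0" "x \<in> {-L..L}"
  shows "2 * \<bar>\<phi> x\<bar> \<le> integral {-L..L} (\<lambda>x. \<bar>\<psi> x\<bar>)"
proof -
  have ai: "\<psi> absolutely_integrable_on {-L..L}" using H1_deriv_abs assms(1) .
  have pi: "\<psi> integrable_on {-L..L}" using assms(1) H1_deriv_def by auto
  have api: "(\<lambda>x. \<bar>\<psi> x\<bar>) integrable_on {-L..L}" using ai by (auto simp: absolutely_integrable_on_def)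
  have x: "-L \<le> x" "x \<le> L" using assms(4) by auto
  have h1: "(\<psi> has_integral \<phi> x) {-L..x}" using assms unfolding H1_deriv_def by auto
  have "L \<in> {-L..L}" using x by auto
  then have "(\<psi> has_integral (\<phi> L - \<phi> (-L))) {-L..L}" using assms(1) unfolding H1_deriv_def by blast
  then have h2: "(\<psi> has_integral 0) {-L..L}" using assms by simp
  have c: "integral {-L..x} \<psi> + integral {x..L} \<psi> = integral {-L..L} \<psi>"
    using Henstock_Kurzweil_Integration.integral_combine[OF x pi] .
  then have e2: "integral {x..L} \<psi> = - \<phi> x" using h1 h2 by (simp add: integral_unique)
  have c2: "integral {-L..x} (\<lambda>x. \<bar>\<psi> x\<bar>) + integral {x..L} (\<lambda>x. \<bar>\<psi> x\<bar>) = integral {-L..L} (\<lambda>x. \<bar>\<psi> x\<bar>)"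
    using Henstock_Kurzweil_Integration.integral_combine[OF x api] .
  have b1: "\<bar>integral {-L..x} \<psi>\<bar> \<le> integral {-L..x} (\<lambda>x. \<bar>\<psi> x\<bar>)"
    by (rule hk_abs_bound) (use integrable_subinterval_real[OF pi] integrable_subinterval_real[OF api] x in auto)
  have b2: "\<bar>integral {x..L} \<psi>\<bar> \<le> integral {x..L} (\<lambda>x. \<bar>\<psi> x\<bar>)"
    by (rule hk_abs_bound) (use integrable_subinterval_real[OF pi] integrable_subinterval_real[OF api] x in auto)
  show ?thesis using b1 b2 c2 e2 h1 by (simp add: integral_unique)
qed

lemma weak_uniq:
  fixes a b g u w vu vw :: "real \<Rightarrow> real" and lam L :: real
  assumes L: "0 < L"
    and apos: "\<forall>x. a x > 0" and bpos: "\<forall>x. b x > 0"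
    and ac: "continuous_on UNIV a" and bc: "continuous_on UNIV b" and gc: "continuous_on UNIV g"
    and mono: "\<And>x y. (g x - g y) * (x - y) \<ge> - lam * (x - y)\<^sup>2"
    and small: "lam \<le> 0 \<or> lam * integral {-L..L} (\<lambda>x. 1 / a x) * integral {-L..L} b < 4"
    and Hu: "H1_deriv L u vu" and Hw: "H1_deriv L w vw"
    and bd1: "u (-L) = w (-L)" and bd2: "u L = w L"
    and equ: "\<forall>\<phi> \<psi>. H1_deriv L \<phi> \<psi> \<and> \<phi> (-L) = 0 \<and> \<phi> L = 0 \<longrightarrow>
           ((\<lambda>x. a x * vu x * \<psi> x + b x * g (u x) * \<phi> x) has_integral 0) {-L..L}"
    and eqw: "\<forall>\<phi> \<psi>. H1_deriv L \<phi> \<psi> \<and> \<phi> (-L) = 0 \<and> \<phi> L = 0 \<longrightarrow>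
           ((\<lambda>x. a x * vw x * \<psi> x + b x * g (w x) * \<phi> x) has_integral 0) {-L..L}"
  shows "\<forall>x\<in>{-L..L}. w x = u x"
proof -
  define \<phi> where "\<phi> x = u x - w x" for x
  define \<psi> where "\<psi> x = vu x - vw x" for x
  define S where "S = {-L..L}"
  have H: "H1_deriv L \<phi> \<psi>" unfolding \<phi>_def \<psi>_def by (rule H1_deriv_diff[OF Hu Hw])
  have p0: "\<phi> (-L) = 0" "\<phi> L = 0" using bd1 bd2 by (auto simp: \<phi>_def)
  have e1: "((\<lambda>x. a x * vu x * \<psi> x + b x * g (u x) * \<phi> x) has_integral 0) S"
    using equ H p0 S_def by blast
  have e2: "((\<lambda>x. a x * vw x * \<psi> x + b x * g (w x) * \<phi> x) has_integral 0) S"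
    using eqw H p0 S_def by blast
  have "((\<lambda>x. (a x * vu x * \<psi> x + b x * g (u x) * \<phi> x) - (a x * vw x * \<psi> x + b x * g (w x) * \<phi> x)) has_integral 0) S"
    using has_integral_diff[OF e1 e2] by simp
  then have e3: "((\<lambda>x. a x * (\<psi> x)\<^sup>2 + b x * (g (u x) - g (w x)) * \<phi> x) has_integral 0) S"
    by (rule has_integral_eq[rotated]) (simp add: \<psi>_def power2_eq_square algebra_simps)
  have uc: "continuous_on S u" using H1_deriv_cont[OF Hu L] S_def by simp
  have wc: "continuous_on S w" using H1_deriv_cont[OF Hw L] S_def by simp
  have phic: "continuous_on S \<phi>" unfolding \<phi>_def using uc wc by (intro continuous_intros)
  have Bc: "continuous_on S (\<lambda>x. b x * (g (u x) - g (w x)) * \<phi> x)"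
    using uc wc phic continuous_on_subset[OF bc] continuous_on_compose2[OF gc uc] continuous_on_compose2[OF gc wc]
    by (intro continuous_intros) auto
  have Bi: "(\<lambda>x. b x * (g (u x) - g (w x)) * \<phi> x) integrable_on S"
    unfolding S_def by (rule integrable_continuous_real) (use Bc S_def in simp)
  have Pi: "(\<lambda>x. a x * (\<psi> x)\<^sup>2) integrable_on S"
  proof -
    have "(\<lambda>x. (a x * (\<psi> x)\<^sup>2 + b x * (g (u x) - g (w x)) * \<phi> x) - b x * (g (u x) - g (w x)) * \<phi> x) integrable_on S"
      using e3 Bi by (intro integrable_diff) auto
    then show ?thesis by simp
  qed
  define P where "P = integral S (\<lambda>x. a x * (\<psi> x)\<^sup>2)"
  have PB: "P = - integral S (\<lambda>x. b x * (g (u x) - g (w x)) * \<phi> x)"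
    using integral_add[OF Pi Bi] e3 P_def by (simp add: integral_unique)
  have P0: "0 \<le> P" unfolding P_def
    by (rule Henstock_Kurzweil_Integration.integral_nonneg[OF Pi]) (use apos in \<open>auto intro!: mult_nonneg_nonneg simp: order_le_less\<close>)
  have bphic: "continuous_on S (\<lambda>x. b x * (\<phi> x)\<^sup>2)"
    using phic continuous_on_subset[OF bc] by (intro continuous_intros) auto
  have bphi: "(\<lambda>x. b x * (\<phi> x)\<^sup>2) integrable_on S"
    unfolding S_def by (rule integrable_continuous_real) (use bphic S_def in simp)
  have Ple: "P \<le> lam * integral S (\<lambda>x. b x * (\<phi> x)\<^sup>2)"
  proof -
    have "- integral S (\<lambda>x. b x * (g (u x) - g (w x)) * \<phi> x) = integral S (\<lambda>x. - (b x * (g (u x) - g (w x)) * \<phi> x))"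
      by simp
    also have "\<dots> \<le> integral S (\<lambda>x. lam * (b x * (\<phi> x)\<^sup>2))"
    proof (rule integral_le)
      show "(\<lambda>x. - (b x * (g (u x) - g (w x)) * \<phi> x)) integrable_on S" using Bi by (rule integrable_neg)
      show "(\<lambda>x. lam * (b x * (\<phi> x)\<^sup>2)) integrable_on S" using bphi by (rule integrable_on_mult_right)
      fix x
      have "- lam * (\<phi> x)\<^sup>2 \<le> (g (u x) - g (w x)) * \<phi> x" using mono[of "u x" "w x"] by (simp add: \<phi>_def)
      then have "b x * (- lam * (\<phi> x)\<^sup>2) \<le> b x * ((g (u x) - g (w x)) * \<phi> x)"
        using bpos by (intro mult_left_mono) (auto simp: less_imp_le)
      then show "- (b x * (g (u x) - g (w x)) * \<phi> x) \<le> lam * (b x * (\<phi> x)\<^sup>2)"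
        by (simp add: algebra_simps)
    qed
    also have "\<dots> = lam * integral S (\<lambda>x. b x * (\<phi> x)\<^sup>2)" by simp
    finally show ?thesis using PB by simp
  qed
  define I where "I = integral S (\<lambda>x. \<bar>\<psi> x\<bar>)"
  define Ai where "Ai = integral S (\<lambda>x. 1 / a x)"
  define Bint where "Bint = integral S b"
  have ai: "\<psi> absolutely_integrable_on S" using H1_deriv_abs[OF H] S_def by simp
  have api: "(\<lambda>x. \<bar>\<psi> x\<bar>) integrable_on S" using ai by (auto simp: absolutely_integrable_on_def)
  have I0: "0 \<le> I" unfolding I_def by (rule Henstock_Kurzweil_Integration.integral_nonneg[OF api]) auto
  have phib: "2 * \<bar>\<phi> x\<bar> \<le> I" if "x \<in> S" for x
    using phi_bound[OF H p0] that S_def I_def by auto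
  have ainvc: "continuous_on S (\<lambda>x. 1 / a x)"
    using continuous_on_subset[OF ac] apos by (intro continuous_intros) (auto simp: less_imp_neq[symmetric])
  have ainv: "(\<lambda>x. 1 / a x) integrable_on S"
    unfolding S_def by (rule integrable_continuous_real) (use ainvc S_def in simp)
  have bi: "b integrable_on S"
    unfolding S_def by (rule integrable_continuous_real) (use bc S_def continuous_on_subset in blast)
  have Ai0: "0 \<le> Ai" unfolding Ai_def
    by (rule Henstock_Kurzweil_Integration.integral_nonneg[OF ainv]) (use apos in \<open>auto simp: less_imp_le\<close>)
  have Bint0: "0 \<le> Bint" unfolding Bint_def
    by (rule Henstock_Kurzweil_Integration.integral_nonneg[OF bi]) (use bpos in \<open>auto simp: less_imp_le\<close>)
  have IPA: "I \<le> (t * P + Ai / t) / 2" if t: "t > 0" for t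
  proof -
    have "I \<le> integral S (\<lambda>x. (t * (a x * (\<psi> x)\<^sup>2) + (1 / a x) / t) / 2)"
      unfolding I_def
    proof (rule integral_le[OF api])
      show "(\<lambda>x. (t * (a x * (\<psi> x)\<^sup>2) + (1 / a x) / t) / 2) integrable_on S"
        using Pi ainv by (intro integrable_on_divide integrable_add integrable_on_mult_right) auto
      fix x
      have ax: "a x > 0" using apos by auto
      have "0 \<le> (t * a x * \<bar>\<psi> x\<bar> - 1)\<^sup>2" by simp
      then have "2 * (t * a x) * \<bar>\<psi> x\<bar> \<le> (t * a x) * (t * a x) * (\<psi> x)\<^sup>2 + 1"
        by (simp add: power2_eq_square algebra_simps abs_mult_self_eq)
      then have "\<bar>\<psi> x\<bar> \<le> ((t * a x) * (\<psi> x)\<^sup>2 + 1 / (t * a x)) / 2"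
        using ax t by (simp add: field_simps)
      then show "\<bar>\<psi> x\<bar> \<le> (t * (a x * (\<psi> x)\<^sup>2) + (1 / a x) / t) / 2"
        by (simp add: algebra_simps)
    qed
    also have "\<dots> = (t * P + Ai / t) / 2"
    proof -
      have i1: "(\<lambda>x. t * (a x * (\<psi> x)\<^sup>2)) integrable_on S" using Pi by (rule integrable_on_mult_right)
      have i2: "(\<lambda>x. (1 / a x) / t) integrable_on S" using ainv by (rule integrable_on_divide)
      have "integral S (\<lambda>x. (t * (a x * (\<psi> x)\<^sup>2) + (1 / a x) / t) / 2)
          = (integral S (\<lambda>x. t * (a x * (\<psi> x)\<^sup>2)) + integral S (\<lambda>x. (1 / a x) / t)) / 2"
        by (rule integral_unique[OF has_integral_divide[OF has_integral_add[OF integrable_integral[OF i1] integrable_integral[OF i2]]]])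
      moreover have "integral S (\<lambda>x. (1 / a x) / t) = Ai / t"
        unfolding Ai_def by (rule integral_unique[OF has_integral_divide[OF integrable_integral[OF ainv]]])
      moreover have "integral S (\<lambda>x. t * (a x * (\<psi> x)\<^sup>2)) = t * P"
        unfolding P_def by (rule integral_unique[OF has_integral_mult_right[OF integrable_integral[OF Pi]]])
      ultimately show ?thesis by simp
    qed
    finally show ?thesis .
  qed
  have Pz: "P = 0"
  proof (cases "lam \<le> 0")
    case True
    have "0 \<le> integral S (\<lambda>x. b x * (\<phi> x)\<^sup>2)"
      by (rule Henstock_Kurzweil_Integration.integral_nonneg[OF bphi]) (use bpos in \<open>auto simp: less_imp_le\<close>)
    then have "lam * integral S (\<lambda>x. b x * (\<phi> x)\<^sup>2) \<le> 0" using True by (simp add: mult_nonpos_nonneg)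
    then show ?thesis using Ple P0 by linarith
  next
    case False
    then have lpos: "lam > 0" and sm: "lam * Ai * Bint < 4" using small by (auto simp: Ai_def Bint_def S_def)
    have "integral S (\<lambda>x. b x * (\<phi> x)\<^sup>2) \<le> integral S (\<lambda>x. b x * (I\<^sup>2 / 4))"
    proof (rule integral_le[OF bphi])
      show "(\<lambda>x. b x * (I\<^sup>2 / 4)) integrable_on S" using bi by (rule integrable_on_mult_left)
      fix x assume x: "x \<in> S"
      have "(2 * \<bar>\<phi> x\<bar>)\<^sup>2 \<le> I\<^sup>2" using phib[OF x] by (intro power_mono) auto
      then have "(\<phi> x)\<^sup>2 \<le> I\<^sup>2 / 4" by (simp add: power_mult_distrib)
      then show "b x * (\<phi> x)\<^sup>2 \<le> b x * (I\<^sup>2 / 4)" using bpos by (intro mult_left_mono) (auto simp: less_imp_le)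
    qed
    also have "\<dots> = Bint * I\<^sup>2 / 4" by (simp add: Bint_def)
    finally have "P \<le> lam * (Bint * I\<^sup>2 / 4)" using Ple lpos by (meson mult_left_mono less_imp_le order_trans)
    then have PI: "P \<le> lam * Bint * I\<^sup>2 / 4" by simp
    show ?thesis
    proof (rule ccontr)
      assume "P \<noteq> 0"
      then have Pp: "P > 0" using P0 by simp
      have Ip: "I > 0"
      proof (rule ccontr)
        assume "\<not> I > 0" then have "I = 0" using I0 by simp
        then show False using PI Pp by simp
      qed
      have "I \<le> ((I / P) * P + Ai / (I / P)) / 2" using IPA[of "I / P"] Ip Pp by simp
      then have "I \<le> (I + Ai * P / I) / 2" using Pp Ip by simp
      then have "I * I \<le> Ai * P" using Ip by (simp add: field_simps)
      then have "P \<le> lam * Bint * (Ai * P) / 4"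
        using PI lpos Bint0 by (smt (verit, best) mult_left_mono power2_eq_square divide_right_mono mult_nonneg_nonneg)
      also have "\<dots> = (lam * Ai * Bint) * P / 4" by (simp add: algebra_simps)
      also have "\<dots> < 4 * P / 4" using sm Pp by (intro divide_strict_right_mono mult_strict_right_mono) auto
      finally show False by simp
    qed
  qed
  have Iz: "I = 0"
  proof (rule ccontr)
    assume "I \<noteq> 0" then have Ip: "I > 0" using I0 by simp
    have "I \<le> (0 + Ai / ((Ai + 1) / I)) / 2" using IPA[of "(Ai + 1) / I"] Ip Ai0 Pz by simp
    also have "\<dots> = Ai * I / (2 * (Ai + 1))" using Ip Ai0 by (simp add: field_simps)
    also have "\<dots> < I"
      using Ip Ai0 by (simp add: field_simps add_nonneg_pos)
    finally show False by simp
  qed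
  show ?thesis
  proof
    fix x assume "x \<in> {-L..L}"
    then have "2 * \<bar>\<phi> x\<bar> \<le> 0" using phib Iz S_def by auto
    then show "w x = u x" by (simp add: \<phi>_def)
  qed
qed

definition clampL :: "real \<Rightarrow> real \<Rightarrow> real" where "clampL L x = max (-L) (min L x)"

lemma clampL_in: "0 \<le> L \<Longrightarrow> clampL L x \<in> {-L..L}" by (auto simp: clampL_def)
lemma clampL_id: "x \<in> {-L..L} \<Longrightarrow> clampL L x = x" by (auto simp: clampL_def)
lemma clampL_cont: "continuous_on UNIV (clampL L)"
  unfolding clampL_def by (intro continuous_intros)

lemma exp_has_int:
  fixes k :: real assumes "0 < k" "\<alpha> \<le> y"
  shows "((\<lambda>t. exp (k * t)) has_integral (exp (k * y) - exp (k * \<alpha>)) / k) {\<alpha>..y}"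
proof -
  have "((\<lambda>t. exp (k * t)) has_integral (exp (k * y) / k - exp (k * \<alpha>) / k)) {\<alpha>..y}"
    by (rule fundamental_theorem_of_calculus[OF assms(2)])
       (use assms in \<open>auto intro!: derivative_eq_intros simp: has_real_derivative_iff_has_vector_derivative[symmetric]\<close>)
  then show ?thesis by (simp add: diff_divide_distrib)
qed

lemma exp_int_le:
  fixes k :: real assumes "0 < k" "\<alpha> \<le> y"
  shows "integral {\<alpha>..y} (\<lambda>t. exp (k * t)) \<le> exp (k * y) / k"
  using integral_unique[OF exp_has_int[OF assms]] assms
  by (simp add: divide_right_mono)

lemma ivp_exists:
  fixes a b h :: "real \<Rightarrow> real" and L m K :: real
  assumes L: "0 < L" and apos: "\<forall>x. a x > 0" and ac: "continuous_on UNIV a"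
    and bpos: "\<forall>x. b x > 0" and bc: "continuous_on UNIV b"
    and hc: "continuous_on UNIV h" and hL: "\<And>z w. \<bar>h z - h w\<bar> \<le> K * \<bar>z - w\<bar>" and K0: "0 \<le> K"
  shows "\<exists>U. (\<forall>s. continuous_on {-L..L} (U s)) \<and>
     (\<forall>s. \<forall>x\<in>{-L..L}. U s x = -m + integral {-L..x} (\<lambda>y. (s + integral {-L..y} (\<lambda>t. b t * h (U s t))) / a y)) \<and>
     (\<forall>x. continuous_on UNIV (\<lambda>s. U s x))"
proof -
  define S where "S = {-L..L}"
  have Sne: "S \<noteq> {}" "compact S" using L S_def by auto
  obtain xa where xa: "xa \<in> S" "\<forall>y\<in>S. a xa \<le> a y"
    using continuous_attains_inf[OF Sne(2,1) continuous_on_subset[OF ac]] by auto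
  define a0 where "a0 = a xa"
  have a0: "0 < a0" "\<And>y. y \<in> S \<Longrightarrow> a0 \<le> a y" using xa apos a0_def by auto
  obtain xb where xb: "xb \<in> S" "\<forall>y\<in>S. b y \<le> b xb"
    using continuous_attains_sup[OF Sne(2,1) continuous_on_subset[OF bc]] by auto
  define b1 where "b1 = b xb"
  have b1: "0 < b1" "\<And>y. y \<in> S \<Longrightarrow> b y \<le> b1" using xb bpos b1_def by auto
  define k where "k = 1 + 2 * K * b1 / a0"
  have k1: "1 \<le> k" using a0 b1 K0 by (simp add: k_def)
  have kpos: "0 < k" using k1 by simp
  have kfac: "K * b1 / (k\<^sup>2 * a0) \<le> 1 / 2"
  proof -
    have "2 * K * b1 / a0 \<le> k" by (simp add: k_def)
    also have "k \<le> k\<^sup>2" using k1 by (simp add: power2_eq_square)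
    finally have "2 * K * b1 \<le> k\<^sup>2 * a0" using a0 by (simp add: divide_le_eq)
    then show ?thesis using a0 kpos by (simp add: divide_le_eq)
  qed
  define p where "p = clampL L"
  have p: "\<And>x. p x \<in> S" "\<And>x. x \<in> S \<Longrightarrow> p x = x" "continuous_on UNIV p"
    using clampL_in[of L] clampL_id[of _ L] clampL_cont[of L] L S_def p_def by auto
  define It where "It v t = b t * h (exp (k * p t) * v t)" for v :: "real \<Rightarrow> real" and t
  define Hf where "Hf s v y = (s + integral {-L..y} (It v)) / a y" for s and v :: "real \<Rightarrow> real" and y
  define Phi where "Phi s v y = exp (- k * y) * (- m + integral {-L..y} (Hf s v))" for s and v :: "real \<Rightarrow> real" and y
  define T where "T s v x = Phi s v (p x)" for s and v :: "real \<Rightarrow> real" and x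
  have Itc: "continuous_on UNIV (It v)" if "continuous_on UNIV v" for v
    unfolding It_def using that p(3) bc
    by (intro continuous_intros continuous_on_compose2[OF hc]) auto
  have Iti: "It v integrable_on S" if "continuous_on UNIV v" for v
    unfolding S_def by (rule integrable_continuous_real) (use Itc[OF that] continuous_on_subset in blast)
  have Hfc: "continuous_on S (Hf s v)" if "continuous_on UNIV v" for s v
    unfolding Hf_def using Iti[OF that] apos continuous_on_subset[OF ac] indefinite_integral_continuous_1[of "It v" "-L" L] S_def
    by (intro continuous_intros) (auto simp: less_imp_neq[symmetric])
  have Hfi: "Hf s v integrable_on S" if "continuous_on UNIV v" for s v
    unfolding S_def by (rule integrable_continuous_real) (use Hfc[OF that] S_def in simp)
  have Phic: "continuous_on S (Phi s v)" if "continuous_on UNIV v" for s v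
    unfolding Phi_def using Hfi[OF that] indefinite_integral_continuous_1[of "Hf s v" "-L" L] S_def
    by (intro continuous_intros) auto
  have Tb: "T s v \<in> bcontfun" if "continuous_on UNIV v" for s v
  proof -
    have c: "continuous_on UNIV (T s v)"
      unfolding T_def by (rule continuous_on_compose2[OF Phic[OF that] p(3)]) (use p in auto)
    have "range (T s v) \<subseteq> Phi s v ` S" unfolding T_def using p by auto
    moreover have "bounded (Phi s v ` S)"
      using compact_imp_bounded[OF compact_continuous_image[OF Phic[OF that] Sne(2)]] .
    ultimately have "bounded (range (T s v))" using bounded_subset by blast
    then show ?thesis using c by (simp add: bcontfun_def)
  qed
  have contr: "\<bar>T s v1 x - T s v2 x\<bar> \<le> D / 2"
    if v1: "continuous_on UNIV v1" and v2: "continuous_on UNIV v2" and D: "\<And>t. \<bar>v1 t - v2 t\<bar> \<le> D"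
    for s v1 v2 D x
  proof -
    have D0: "0 \<le> D" using D[of 0] by linarith
    define y0 where "y0 = p x"
    have y0S: "y0 \<in> S" using p y0_def by auto
    define F where "F v y = integral {-L..y} (It v)" for v :: "real \<Rightarrow> real" and y
    have Fdiff: "\<bar>F v1 y - F v2 y\<bar> \<le> K * b1 * D * exp (k * y) / k" if yS: "y \<in> S" for y
    proof -
      have sub: "{-L..y} \<subseteq> S" using yS S_def by auto
      have i1: "It v1 integrable_on {-L..y}" using Iti[OF v1] sub S_def integrable_subinterval_real by blast
      have i2: "It v2 integrable_on {-L..y}" using Iti[OF v2] sub S_def integrable_subinterval_real by blast
      have ie: "(\<lambda>t. exp (k * t)) integrable_on {-L..y}" using exp_has_int[OF kpos, of "-L" y] yS S_def by auto
      have "F v1 y - F v2 y = integral {-L..y} (\<lambda>t. It v1 t - It v2 t)"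
        unfolding F_def using integral_diff[OF i1 i2] by simp
      also have "\<bar>\<dots>\<bar> \<le> integral {-L..y} (\<lambda>t. K * b1 * D * exp (k * t))"
      proof (rule hk_abs_bound)
        show "(\<lambda>t. It v1 t - It v2 t) integrable_on {-L..y}" using i1 i2 by (rule integrable_diff)
        show "(\<lambda>t. K * b1 * D * exp (k * t)) integrable_on {-L..y}" using ie by (rule integrable_on_mult_right)
        fix t assume t: "t \<in> {-L..y}"
        then have tS: "t \<in> S" using sub by auto
        have "\<bar>It v1 t - It v2 t\<bar> = b t * \<bar>h (exp (k * t) * v1 t) - h (exp (k * t) * v2 t)\<bar>"
          unfolding It_def using p(2)[OF tS] bpos[rule_format, of t] by (simp add: right_diff_distrib[symmetric] abs_mult)
        also have "\<dots> \<le> b1 * (K * \<bar>exp (k * t) * v1 t - exp (k * t) * v2 t\<bar>)"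
          using hL b1 b1(2)[OF tS] bpos K0 by (intro mult_mono) (auto simp: less_imp_le)
        also have "\<dots> = b1 * K * exp (k * t) * \<bar>v1 t - v2 t\<bar>"
          by (simp add: right_diff_distrib[symmetric] abs_mult)
        also have "\<dots> \<le> b1 * K * exp (k * t) * D"
          using D[of t] b1 K0 by (intro mult_left_mono) auto
        finally show "\<bar>It v1 t - It v2 t\<bar> \<le> K * b1 * D * exp (k * t)" by (simp add: algebra_simps)
      qed
      also have "\<dots> = K * b1 * D * integral {-L..y} (\<lambda>t. exp (k * t))" by simp
      also have "\<dots> \<le> K * b1 * D * (exp (k * y) / k)"
        using exp_int_le[OF kpos, of "-L" y] yS S_def K0 b1 D0 by (intro mult_left_mono) auto
      finally show ?thesis by simp
    qed
    have sub0: "{-L..y0} \<subseteq> S" using y0S S_def by auto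
    have h1: "Hf s v1 integrable_on {-L..y0}" using Hfi[OF v1] sub0 S_def integrable_subinterval_real by blast
    have h2: "Hf s v2 integrable_on {-L..y0}" using Hfi[OF v2] sub0 S_def integrable_subinterval_real by blast
    have ie0: "(\<lambda>t. exp (k * t)) integrable_on {-L..y0}" using exp_has_int[OF kpos, of "-L" y0] y0S S_def by auto
    have "T s v1 x - T s v2 x = exp (- k * y0) * (integral {-L..y0} (Hf s v1) - integral {-L..y0} (Hf s v2))"
      unfolding T_def Phi_def y0_def by (simp add: algebra_simps)
    also have "\<dots> = exp (- k * y0) * integral {-L..y0} (\<lambda>y. Hf s v1 y - Hf s v2 y)"
      using integral_diff[OF h1 h2] by simp
    finally have eq: "T s v1 x - T s v2 x = exp (- k * y0) * integral {-L..y0} (\<lambda>y. Hf s v1 y - Hf s v2 y)" .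
    have "\<bar>integral {-L..y0} (\<lambda>y. Hf s v1 y - Hf s v2 y)\<bar> \<le> integral {-L..y0} (\<lambda>y. (K * b1 * D / (k * a0)) * exp (k * y))"
    proof (rule hk_abs_bound)
      show "(\<lambda>y. Hf s v1 y - Hf s v2 y) integrable_on {-L..y0}" using h1 h2 by (rule integrable_diff)
      show "(\<lambda>y. (K * b1 * D / (k * a0)) * exp (k * y)) integrable_on {-L..y0}" using ie0 by (rule integrable_on_mult_right)
      fix y assume y: "y \<in> {-L..y0}"
      then have yS: "y \<in> S" using sub0 by auto
      have ay: "a0 \<le> a y" "0 < a y" using a0 yS apos by auto
      have "Hf s v1 y - Hf s v2 y = (F v1 y - F v2 y) / a y"
        unfolding Hf_def F_def by (simp add: diff_divide_distrib[symmetric])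
      then have "\<bar>Hf s v1 y - Hf s v2 y\<bar> = \<bar>F v1 y - F v2 y\<bar> / a y" using ay by (simp add: abs_divide)
      also have "\<dots> \<le> (K * b1 * D * exp (k * y) / k) / a y"
        using Fdiff[OF yS] ay by (intro divide_right_mono) auto
      also have "\<dots> \<le> (K * b1 * D * exp (k * y) / k) / a0"
        using ay a0 K0 b1 D0 kpos by (intro divide_left_mono) auto
      finally show "\<bar>Hf s v1 y - Hf s v2 y\<bar> \<le> (K * b1 * D / (k * a0)) * exp (k * y)" by simp
    qed
    also have "\<dots> = (K * b1 * D / (k * a0)) * integral {-L..y0} (\<lambda>y. exp (k * y))" by simp
    also have "\<dots> \<le> (K * b1 * D / (k * a0)) * (exp (k * y0) / k)"
      using exp_int_le[OF kpos, of "-L" y0] y0S S_def K0 b1 D0 a0 kpos by (intro mult_left_mono) auto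
    finally have "\<bar>T s v1 x - T s v2 x\<bar> \<le> exp (- k * y0) * ((K * b1 * D / (k * a0)) * (exp (k * y0) / k))"
      unfolding eq abs_mult abs_exp_cancel by (intro mult_left_mono) auto
    also have "\<dots> = (K * b1 / (k\<^sup>2 * a0)) * D"
      by (simp add: power2_eq_square exp_minus field_simps)
    also have "\<dots> \<le> (1 / 2) * D" using kfac D0 by (intro mult_right_mono) auto
    finally show ?thesis by simp
  qed
  define Ai where "Ai = integral S (\<lambda>y. 1 / a y)"
  have ainvc: "continuous_on S (\<lambda>x. 1 / a x)"
    using continuous_on_subset[OF ac] apos by (intro continuous_intros) (auto simp: less_imp_neq[symmetric])
  have ainv: "(\<lambda>x. 1 / a x) integrable_on S"
    unfolding S_def by (rule integrable_continuous_real) (use ainvc S_def in simp)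
  define C where "C = exp (k * L) * Ai"
  have sdiff: "\<bar>T s v x - T s' v x\<bar> \<le> C * \<bar>s - s'\<bar>" if v: "continuous_on UNIV v" for s s' v x
  proof -
    define y0 where "y0 = p x"
    have y0S: "y0 \<in> S" using p y0_def by auto
    have sub0: "{-L..y0} \<subseteq> S" using y0S S_def by auto
    have h1: "Hf s v integrable_on {-L..y0}" using Hfi[OF v] sub0 S_def integrable_subinterval_real by blast
    have h2: "Hf s' v integrable_on {-L..y0}" using Hfi[OF v] sub0 S_def integrable_subinterval_real by blast
    have ai0: "(\<lambda>y. 1 / a y) integrable_on {-L..y0}" using ainv sub0 S_def integrable_subinterval_real by blast
    have d: "integral {-L..y0} (Hf s v) - integral {-L..y0} (Hf s' v) = integral {-L..y0} (\<lambda>y. Hf s v y - Hf s' v y)"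
      using integral_diff[OF h1 h2] by simp
    have "T s v x - T s' v x = exp (- k * y0) * (integral {-L..y0} (Hf s v) - integral {-L..y0} (Hf s' v))"
      unfolding T_def Phi_def y0_def[symmetric] by (simp add: algebra_simps)
    also have "\<dots> = exp (- k * y0) * integral {-L..y0} (\<lambda>y. Hf s v y - Hf s' v y)" using d by simp
    also have "(\<lambda>y. Hf s v y - Hf s' v y) = (\<lambda>y. (s - s') * (1 / a y))"
      unfolding Hf_def by (auto simp: diff_divide_distrib[symmetric])
    also have "integral {-L..y0} (\<lambda>y. (s - s') * (1 / a y)) = (s - s') * integral {-L..y0} (\<lambda>y. 1 / a y)"
      by (rule integral_mult_right)
    finally have eq: "T s v x - T s' v x = exp (- k * y0) * ((s - s') * integral {-L..y0} (\<lambda>y. 1 / a y))" .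
    have "integral {-L..y0} (\<lambda>y. 1 / a y) \<le> Ai"
    proof -
      have "integral {-L..y0} (\<lambda>y. 1 / a y) + integral {y0..L} (\<lambda>y. 1 / a y) = Ai"
        unfolding Ai_def S_def using Henstock_Kurzweil_Integration.integral_combine[of "-L" y0 L "\<lambda>y. 1 / a y"] ainv y0S S_def by auto
      moreover have "0 \<le> integral {y0..L} (\<lambda>y. 1 / a y)"
        using ainv y0S S_def apos integrable_subinterval_real[of "\<lambda>y. 1 / a y" "-L" L y0 L]
        by (intro Henstock_Kurzweil_Integration.integral_nonneg) (auto simp: less_imp_le)
      ultimately show ?thesis by linarith
    qed
    moreover have "0 \<le> integral {-L..y0} (\<lambda>y. 1 / a y)"
      using ai0 apos by (intro Henstock_Kurzweil_Integration.integral_nonneg) (auto simp: less_imp_le)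
    moreover have "exp (- k * y0) \<le> exp (k * L)"
    proof -
      have "k * (- y0) \<le> k * L" using y0S S_def kpos by (intro mult_left_mono) auto
      then show ?thesis by simp
    qed
    ultimately have "exp (- k * y0) * (\<bar>s - s'\<bar> * integral {-L..y0} (\<lambda>y. 1 / a y)) \<le> exp (k * L) * (\<bar>s - s'\<bar> * Ai)"
      by (intro mult_mono) auto
    moreover have "\<bar>T s v x - T s' v x\<bar> = exp (- k * y0) * (\<bar>s - s'\<bar> * integral {-L..y0} (\<lambda>y. 1 / a y))"
      unfolding eq abs_mult using \<open>0 \<le> integral {-L..y0} (\<lambda>y. 1 / a y)\<close> by simp
    ultimately show ?thesis unfolding C_def by (simp add: algebra_simps)
  qed
  define Tb where "Tb s v = Bcontfun (T s (apply_bcontfun v))" for s and v :: "real \<Rightarrow>\<^sub>C real"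
  have Tbapp: "apply_bcontfun (Tb s v) = T s (apply_bcontfun v)" for s v
    unfolding Tb_def by (rule Bcontfun_inverse[OF Tb]) simp
  have Tbcontr: "dist (Tb s v1) (Tb s v2) \<le> 1 / 2 * dist v1 v2" for s v1 v2
  proof (rule dist_bound)
    fix x
    have "\<bar>T s v1 x - T s v2 x\<bar> \<le> dist v1 v2 / 2"
      by (rule contr) (auto simp: dist_real_def[symmetric] intro: dist_bounded)
    then show "dist (Tb s v1 x) (Tb s v2 x) \<le> 1 / 2 * dist v1 v2" by (simp add: Tbapp dist_real_def)
  qed
  have Tbs: "dist (Tb s v) (Tb s' v) \<le> C * \<bar>s - s'\<bar>" for s s' v
    by (rule dist_bound) (simp add: Tbapp dist_real_def sdiff)
  have ex1: "\<exists>!v. Tb s v = v" for s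
    by (rule banach_fix_type[of "1/2"]) (use Tbcontr in auto)
  define V where "V s = (THE v. Tb s v = v)" for s
  have Vfix: "Tb s (V s) = V s" for s unfolding V_def using theI'[OF ex1] .
  have Vdist: "dist (V s) (V s') \<le> 2 * C * \<bar>s - s'\<bar>" for s s'
  proof -
    have "dist (V s) (V s') \<le> dist (Tb s (V s)) (Tb s (V s')) + dist (Tb s (V s')) (Tb s' (V s'))"
      using dist_triangle[of "Tb s (V s)" "Tb s' (V s')" "Tb s (V s')"] Vfix by metis
    also have "\<dots> \<le> 1 / 2 * dist (V s) (V s') + C * \<bar>s - s'\<bar>" using Tbcontr Tbs by (intro add_mono)
    finally show ?thesis by simp
  qed
  define U where "U s x = exp (k * p x) * V s x" for s x
  show ?thesis
  proof (intro exI[of _ U] conjI allI ballI)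
    fix s
    show "continuous_on {-L..L} (U s)"
      unfolding U_def using p(3) by (intro continuous_intros continuous_on_subset[OF continuous_on_apply_bcontfun]) (auto intro: continuous_on_subset)
  next
    fix s x assume x: "x \<in> {-L..L}"
    have px: "p x = x" using p x S_def by auto
    have "V s x = T s (V s) x" using Vfix[of s] Tbapp[of s "V s"] by metis
    also have "\<dots> = exp (- k * x) * (- m + integral {-L..x} (Hf s (V s)))"
      unfolding T_def Phi_def px ..
    also have "Hf s (V s) = (\<lambda>y. (s + integral {-L..y} (\<lambda>t. b t * h (U s t))) / a y)"
      unfolding Hf_def It_def U_def ..
    finally show "U s x = -m + integral {-L..x} (\<lambda>y. (s + integral {-L..y} (\<lambda>t. b t * h (U s t))) / a y)"
      unfolding U_def px by (simp add: exp_minus field_simps)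
  next
    fix x
    show "continuous_on UNIV (\<lambda>s. U s x)"
    proof (rule lipschitz_on_continuous_on)
      show "(exp (k * p x) * (2 * \<bar>C\<bar>))-lipschitz_on UNIV (\<lambda>s. U s x)"
      proof (rule lipschitz_onI)
        fix s s' :: real
        have "dist (U s x) (U s' x) = exp (k * p x) * dist (V s x) (V s' x)"
          unfolding U_def dist_real_def by (simp add: right_diff_distrib[symmetric] abs_mult)
        also have "\<dots> \<le> exp (k * p x) * (2 * C * \<bar>s - s'\<bar>)"
          by (intro mult_left_mono order_trans[OF dist_bounded Vdist]) auto
        also have "\<dots> \<le> exp (k * p x) * (2 * \<bar>C\<bar> * \<bar>s - s'\<bar>)"
          by (intro mult_left_mono) (auto intro: mult_right_mono)
        finally show "dist (U s x) (U s' x) \<le> exp (k * p x) * (2 * \<bar>C\<bar>) * dist s s'"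
          by (simp add: dist_real_def mult.assoc)
      qed auto
    qed
  qed
qed

lemma maxp:
  fixes u H a :: "real \<Rightarrow> real" and \<alpha> \<beta> R :: real
  assumes ab: "\<alpha> \<le> \<beta>"
    and ueq: "\<And>x. x \<in> {\<alpha>..\<beta>} \<Longrightarrow> u x = u \<alpha> + integral {\<alpha>..x} (\<lambda>y. H y / a y)"
    and Hc: "continuous_on {\<alpha>..\<beta>} H" and ac: "continuous_on {\<alpha>..\<beta>} a" and apos: "\<forall>x. a x > 0"
    and mono: "\<And>y1 y2. \<alpha> \<le> y1 \<Longrightarrow> y1 \<le> y2 \<Longrightarrow> y2 \<le> \<beta> \<Longrightarrow> (\<forall>y\<in>{y1..y2}. R \<le> u y) \<Longrightarrow> H y1 \<le> H y2"
    and bd: "u \<alpha> \<le> R" "u \<beta> \<le> R"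
  shows "\<forall>x\<in>{\<alpha>..\<beta>}. u x \<le> R"
proof (rule ccontr)
  define S where "S = {\<alpha>..\<beta>}"
  define Hq where "Hq = (\<lambda>y. H y / a y)"
  have Hqc: "continuous_on S Hq" unfolding Hq_def S_def
    using Hc ac apos by (intro continuous_intros) (auto simp: less_imp_neq[symmetric])
  have Hqi: "Hq integrable_on S" unfolding S_def by (rule integrable_continuous_real) (use Hqc S_def in simp)
  have uc: "continuous_on S u"
  proof (rule continuous_on_eq)
    show "continuous_on S (\<lambda>x. u \<alpha> + integral {\<alpha>..x} Hq)"
      unfolding S_def by (intro continuous_intros indefinite_integral_continuous_1) (use Hqi S_def in simp)
    fix x assume "x \<in> S"
    then show "u \<alpha> + integral {\<alpha>..x} Hq = u x" using ueq[of x] S_def by (simp add: Hq_def)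
  qed
  assume "\<not> (\<forall>x\<in>{\<alpha>..\<beta>}. u x \<le> R)"
  then obtain x1 where x1: "x1 \<in> S" "u x1 > R" using S_def by auto
  have Sne: "S \<noteq> {}" "compact S" using x1 S_def by auto
  obtain x0 where x0: "x0 \<in> S" "\<forall>y\<in>S. u y \<le> u x0"
    using continuous_attains_sup[OF Sne(2,1) uc] by auto
  have ux0: "u x0 > R" using x0 x1 by force
  have x0i: "\<alpha> < x0" "x0 < \<beta>"
  proof -
    have "x0 \<noteq> \<alpha>" "x0 \<noteq> \<beta>" using ux0 bd by auto
    then show "\<alpha> < x0" "x0 < \<beta>" using x0 S_def by auto
  qed
  have Hx0: "H x0 = 0"
  proof -
    have "((\<lambda>x. integral {\<alpha>..x} Hq) has_real_derivative Hq x0) (at x0 within S)"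
      using integral_has_real_derivative[of \<alpha> \<beta> Hq x0] Hqc x0 S_def by simp
    then have "((\<lambda>x. u \<alpha> + integral {\<alpha>..x} Hq) has_real_derivative Hq x0) (at x0 within S)"
      by (auto intro!: derivative_eq_intros)
    then have "(u has_real_derivative Hq x0) (at x0 within S)"
      by (rule has_field_derivative_transform_within[where d=1]) (use x0 in \<open>auto simp: S_def Hq_def ueq[symmetric]\<close>)
    moreover have "x0 \<in> interior S" using x0i S_def by auto
    ultimately have d: "DERIV u x0 :> Hq x0" using at_within_interior by metis
    have "Hq x0 = 0"
    proof (rule DERIV_local_max[OF d])
      show "0 < min (x0 - \<alpha>) (\<beta> - x0)" using x0i by simp
      show "\<forall>y. \<bar>x0 - y\<bar> < min (x0 - \<alpha>) (\<beta> - x0) \<longrightarrow> u y \<le> u x0"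
      proof (intro allI impI)
        fix y assume "\<bar>x0 - y\<bar> < min (x0 - \<alpha>) (\<beta> - x0)"
        then have "y \<in> S" unfolding S_def by (simp add: abs_less_iff)
        then show "u y \<le> u x0" using x0 by blast
      qed
    qed
    then show ?thesis using apos[rule_format, of x0] by (simp add: Hq_def)
  qed
  define Z where "Z = {x0..\<beta>} \<inter> u -` {..R}"
  have Zc: "compact Z"
  proof -
    have "closed Z" unfolding Z_def
      by (rule continuous_closed_preimage) (use continuous_on_subset[OF uc] x0 S_def in auto)
    moreover have "bounded Z" unfolding Z_def by (rule bounded_subset[of "{x0..\<beta>}"]) auto
    ultimately show ?thesis using compact_eq_bounded_closed by blast
  qed
  have "\<beta> \<in> Z" using bd x0i Z_def by auto
  then have Zne: "Z \<noteq> {}" by auto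
  obtain d where d: "d \<in> Z" "\<forall>y\<in>Z. d \<le> y"
    using continuous_attains_inf[OF Zc Zne continuous_on_id] by auto
  have dx: "x0 \<le> d" "d \<le> \<beta>" "u d \<le> R" using d Z_def by auto
  have dsub: "{x0..d} \<subseteq> S" using dx x0 S_def by auto
  have ud: "u d = R"
  proof -
    obtain c where c: "x0 \<le> c" "c \<le> d" "u c = R"
      using IVT2'[of u d R x0] dx ux0 continuous_on_subset[OF uc dsub] by auto
    then have "c \<in> Z" using dx Z_def by auto
    then have "d \<le> c" using d by auto
    then show ?thesis using c by simp
  qed
  have above: "R \<le> u y" if "y \<in> {x0..d}" for y
  proof (rule ccontr)
    assume "\<not> R \<le> u y"
    then have "y \<in> Z" using that dx Z_def by auto
    then have "d \<le> y" using d by auto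
    then have "y = d" using that by auto
    then show False using ud \<open>\<not> R \<le> u y\<close> by simp
  qed
  have Hnn: "0 \<le> Hq y" if "y \<in> {x0..d}" for y
  proof -
    have "H x0 \<le> H y" using mono[of x0 y] that dx x0i above by auto
    then show ?thesis using Hx0 apos[rule_format, of y] by (simp add: Hq_def)
  qed
  have "u d - u x0 = integral {x0..d} Hq"
  proof -
    have "integral {\<alpha>..x0} Hq + integral {x0..d} Hq = integral {\<alpha>..d} Hq"
      using Henstock_Kurzweil_Integration.integral_combine[of \<alpha> x0 d Hq] x0i dx
        integrable_subinterval_real[OF Hqi[unfolded S_def], of \<alpha> d] by auto
    then show ?thesis using ueq[of d] ueq[of x0] x0i dx Hq_def by auto
  qed
  moreover have "0 \<le> integral {x0..d} Hq"
    using Hnn integrable_subinterval_real[OF Hqi[unfolded S_def], of x0 d] dsub S_def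
    by (intro Henstock_Kurzweil_Integration.integral_nonneg) auto
  ultimately show False using ud ux0 by simp
qed

lemma lip_interval:
  fixes g g2 :: "real \<Rightarrow> real"
  assumes der: "\<And>s. DERIV g s :> g2 s" and K: "\<And>x. x \<in> {-R..R} \<Longrightarrow> \<bar>g2 x\<bar> \<le> K"
    and x: "x \<in> {-R..R}" and y: "y \<in> {-R..R}"
  shows "\<bar>g x - g y\<bar> \<le> K * \<bar>x - y\<bar>"
proof -
  have *: "\<bar>g q - g p\<bar> \<le> K * (q - p)" if "p \<in> {-R..R}" "q \<in> {-R..R}" "p < q" for p q
  proof -
    obtain z where z: "p < z" "z < q" "g q - g p = (q - p) * g2 z"
      using MVT2[OF \<open>p < q\<close> der] by blast
    have "z \<in> {-R..R}" using z that by auto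
    then have "\<bar>g2 z\<bar> \<le> K" by (rule K)
    then show ?thesis using z that by (simp add: abs_mult mult.commute mult_right_mono)
  qed
  consider "x < y" | "x = y" | "y < x" by linarith
  then show ?thesis
  proof cases
    case 1 then show ?thesis using *[OF x y] by (simp add: abs_minus_commute)
  next
    case 2 then show ?thesis by simp
  next
    case 3 then show ?thesis using *[OF y x] by simp
  qed
qed

lemma clampL_lip: "\<bar>clampL R z - clampL R w\<bar> \<le> \<bar>z - w\<bar>"
  unfolding clampL_def by (auto simp: max_def min_def abs_if)

lemma g_clamp_facts:
  fixes g g2 :: "real \<Rightarrow> real"
  assumes der: "\<And>s. DERIV g s :> g2 s" and g2c: "continuous_on UNIV g2" and R: "0 \<le> R"
  shows "\<exists>K\<ge>0. \<forall>z w. \<bar>g (clampL R z) - g (clampL R w)\<bar> \<le> K * \<bar>z - w\<bar>"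
    and "\<exists>B. \<forall>z. \<bar>g (clampL R z)\<bar> \<le> B"
proof -
  have ne: "{-R..R} \<noteq> {}" "compact {-R..R}" using R by auto
  have "continuous_on {-R..R} (\<lambda>x. \<bar>g2 x\<bar>)"
    using g2c by (intro continuous_intros) (auto intro: continuous_on_subset)
  then obtain x0 where x0: "x0 \<in> {-R..R}" "\<forall>y\<in>{-R..R}. \<bar>g2 y\<bar> \<le> \<bar>g2 x0\<bar>"
    using continuous_attains_sup[OF ne(2,1), of "\<lambda>x. \<bar>g2 x\<bar>"] by blast
  define K where "K = \<bar>g2 x0\<bar>"
  show "\<exists>K\<ge>0. \<forall>z w. \<bar>g (clampL R z) - g (clampL R w)\<bar> \<le> K * \<bar>z - w\<bar>"
  proof (intro exI[of _ K] conjI allI)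
    fix z w
    have "\<bar>g (clampL R z) - g (clampL R w)\<bar> \<le> K * \<bar>clampL R z - clampL R w\<bar>"
      by (rule lip_interval[OF der]) (use x0 K_def clampL_in R in auto)
    also have "\<dots> \<le> K * \<bar>z - w\<bar>" using clampL_lip K_def by (intro mult_left_mono) auto
    finally show "\<bar>g (clampL R z) - g (clampL R w)\<bar> \<le> K * \<bar>z - w\<bar>" .
  qed (simp add: K_def)
  have gc: "continuous_on UNIV g"
    using der by (meson DERIV_isCont continuous_at_imp_continuous_on)
  have "continuous_on {-R..R} (\<lambda>x. \<bar>g x\<bar>)"
    using gc by (intro continuous_intros) (auto intro: continuous_on_subset)
  then obtain x1 where x1: "x1 \<in> {-R..R}" "\<forall>y\<in>{-R..R}. \<bar>g y\<bar> \<le> \<bar>g x1\<bar>"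
    using continuous_attains_sup[OF ne(2,1), of "\<lambda>x. \<bar>g x\<bar>"] by blast
  show "\<exists>B. \<forall>z. \<bar>g (clampL R z)\<bar> \<le> B"
    using x1 clampL_in[OF R] by blast
qed

lemma hk_le_lborel:
  fixes f :: "real \<Rightarrow> real"
  assumes "integrable lborel f"
  shows "integral {c..d} f \<le> (\<integral>x. \<bar>f x\<bar> \<partial>lborel)"
proof -
  have si: "set_integrable lborel {c..d} f"
    unfolding set_integrable_def by (rule integrable_mult_indicator) (use assms in auto)
  have "integral {c..d} f = (LINT x : {c..d} | lborel. f x)"
    using set_borel_integral_eq_integral(2)[OF si] by simp
  also have "\<dots> = (\<integral>x. indicator {c..d} x * f x \<partial>lborel)" unfolding set_lebesgue_integral_def by simp
  also have "\<dots> \<le> (\<integral>x. \<bar>f x\<bar> \<partial>lborel)"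
    using si assms unfolding set_integrable_def
    by (intro integral_mono) (auto split: split_indicator)
  finally show ?thesis .
qed

lemma integral_pos_cont:
  fixes f :: "real \<Rightarrow> real"
  assumes "c < d" "continuous_on {c..d} f" "\<forall>x. f x > 0"
  shows "integral {c..d} f > 0"
proof -
  have ne: "{c..d} \<noteq> {}" "compact {c..d}" using assms by auto
  obtain x0 where x0: "x0 \<in> {c..d}" "\<forall>y\<in>{c..d}. f x0 \<le> f y"
    using continuous_attains_inf[OF ne(2,1) assms(2)] by blast
  have "integral {c..d} (\<lambda>_. f x0) \<le> integral {c..d} f"
    by (rule integral_le) (use x0 integrable_continuous_real[OF assms(2)] in auto)
  moreover have "integral {c..d} (\<lambda>_. f x0) = (d - c) * f x0" using assms(1) by simp
  moreover have "(d - c) * f x0 > 0" using assms(1) assms(3)[rule_format, of x0] by simp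
  ultimately show ?thesis by linarith
qed

lemma existence_part:
  fixes a b g :: "real \<Rightarrow> real" and L m R K B :: real
  assumes L: "0 < L" and m: "0 < m" and mR: "m \<le> R"
    and apos: "\<forall>x. a x > 0" and ac: "continuous_on UNIV a"
    and bpos: "\<forall>x. b x > 0" and bc: "continuous_on UNIV b"
    and gc: "continuous_on UNIV g"
    and gR: "0 \<le> g R" and gmR: "g (-R) \<le> 0"
    and K0: "0 \<le> K" and gK: "\<forall>z w. \<bar>g (clampL R z) - g (clampL R w)\<bar> \<le> K * \<bar>z - w\<bar>"
    and gB: "\<forall>z. \<bar>g (clampL R z)\<bar> \<le> B"
  shows "\<exists>u v. H1m L m u \<and> H1_deriv L u v \<and> (\<forall>\<phi> \<psi>. H1_deriv L \<phi> \<psi> \<and> \<phi> (-L) = 0 \<and> \<phi> L = 0 \<longrightarrow>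
           ((\<lambda>x. a x * v x * \<psi> x + b x * g (u x) * \<phi> x) has_integral 0) {-L..L})"
proof -
  define S where "S = {-L..L}"
  define gh where "gh z = g (clampL R z)" for z
  have R0: "0 \<le> R" using m mR by simp
  have ghc: "continuous_on UNIV gh"
    unfolding gh_def by (rule continuous_on_compose2[OF gc clampL_cont]) auto
  have B0: "0 \<le> B" using gB by (meson abs_ge_zero order_trans)
  have ghK: "\<And>z w. \<bar>gh z - gh w\<bar> \<le> K * \<bar>z - w\<bar>" using gK unfolding gh_def by blast
  obtain U where Uc: "\<And>s. continuous_on {-L..L} (U s)"
    and Ueq: "\<And>s x. x \<in> {-L..L} \<Longrightarrow> U s x = -m + integral {-L..x} (\<lambda>y. (s + integral {-L..y} (\<lambda>t. b t * gh (U s t))) / a y)"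
    and Us: "\<And>x. continuous_on UNIV (\<lambda>s. U s x)"
    using ivp_exists[OF L apos ac bpos bc ghc ghK K0, of m] by blast
  define F where "F s y = integral {-L..y} (\<lambda>t. b t * gh (U s t))" for s y
  have fc: "continuous_on S (\<lambda>t. b t * gh (U s t))" for s
    using continuous_on_subset[OF bc] continuous_on_compose2[OF ghc Uc] S_def
    by (intro continuous_intros) auto
  have fi: "(\<lambda>t. b t * gh (U s t)) integrable_on S" for s
    unfolding S_def by (rule integrable_continuous_real) (use fc S_def in simp)
  have Fc: "continuous_on S (F s)" for s
    unfolding F_def S_def by (rule indefinite_integral_continuous_1) (use fi S_def in simp)
  define Ai where "Ai = integral S (\<lambda>y. 1 / a y)"
  define Bi where "Bi = integral S b"
  have ainvc: "continuous_on S (\<lambda>x. 1 / a x)"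
    using continuous_on_subset[OF ac] apos by (intro continuous_intros) (auto simp: less_imp_neq[symmetric])
  have ainv: "(\<lambda>x. 1 / a x) integrable_on S"
    unfolding S_def by (rule integrable_continuous_real) (use ainvc S_def in simp)
  have bi: "b integrable_on S"
    unfolding S_def by (rule integrable_continuous_real) (use bc S_def continuous_on_subset in blast)
  have Aipos: "0 < Ai" unfolding Ai_def S_def
    by (rule integral_pos_cont) (use L ainvc S_def apos in auto)
  have Bi0: "0 \<le> Bi" unfolding Bi_def
    by (rule Henstock_Kurzweil_Integration.integral_nonneg[OF bi]) (use bpos in \<open>auto simp: less_imp_le\<close>)
  have FB: "\<bar>F s y\<bar> \<le> B * Bi" if y: "y \<in> S" for s y
  proof -
    have sub: "{-L..y} \<subseteq> S" using y S_def by auto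
    have "\<bar>F s y\<bar> \<le> integral {-L..y} (\<lambda>t. B * b t)"
      unfolding F_def
    proof (rule hk_abs_bound)
      show "(\<lambda>t. b t * gh (U s t)) integrable_on {-L..y}" using fi sub S_def integrable_subinterval_real by blast
      show "(\<lambda>t. B * b t) integrable_on {-L..y}"
        using bi sub S_def integrable_subinterval_real integrable_on_mult_right by blast
      fix t
      have "\<bar>gh (U s t)\<bar> \<le> B" using gB unfolding gh_def by blast
      then have "b t * \<bar>gh (U s t)\<bar> \<le> b t * B" using bpos[rule_format, of t] by (intro mult_left_mono) auto
      then show "\<bar>b t * gh (U s t)\<bar> \<le> B * b t"
        using bpos[rule_format, of t] by (simp add: abs_mult algebra_simps)
    qed
    also have "\<dots> = B * integral {-L..y} b" by simp
    also have "\<dots> \<le> B * Bi"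
    proof -
      have "integral {-L..y} b + integral {y..L} b = Bi"
        unfolding Bi_def S_def using Henstock_Kurzweil_Integration.integral_combine[of "-L" y L b] bi y S_def by auto
      moreover have "0 \<le> integral {y..L} b"
        using bi y S_def bpos integrable_subinterval_real[of b "-L" L y L]
        by (intro Henstock_Kurzweil_Integration.integral_nonneg) (auto simp: less_imp_le)
      ultimately show ?thesis using B0 by (intro mult_left_mono) auto
    qed
    finally show ?thesis .
  qed
  define D where "D = B * Bi * Ai"
  have D0: "0 \<le> D" using B0 Bi0 Aipos D_def by simp
  have UL: "\<bar>U s L - (- m + s * Ai)\<bar> \<le> D" for s
  proof -
    have LS: "L \<in> {-L..L}" using L by simp
    have Fai: "(\<lambda>y. F s y / a y) integrable_on S"
      unfolding S_def by (rule integrable_continuous_real)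
        (use Fc continuous_on_subset[OF ac] apos S_def in \<open>auto intro!: continuous_intros simp: less_imp_neq[symmetric]\<close>)
    have "U s L = -m + integral S (\<lambda>y. (s + F s y) / a y)"
      using Ueq[OF LS] unfolding F_def S_def by simp
    also have "(\<lambda>y. (s + F s y) / a y) = (\<lambda>y. s * (1 / a y) + F s y / a y)"
      by (auto simp: add_divide_distrib)
    also have "integral S \<dots> = integral S (\<lambda>y. s * (1 / a y)) + integral S (\<lambda>y. F s y / a y)"
      by (rule integral_add[OF integrable_on_mult_right[OF ainv] Fai])
    also have "integral S (\<lambda>y. s * (1 / a y)) = s * Ai"
      unfolding Ai_def by (rule integral_mult_right)
    finally have e: "U s L - (- m + s * Ai) = integral S (\<lambda>y. F s y / a y)" by simp
    have "\<bar>integral S (\<lambda>y. F s y / a y)\<bar> \<le> integral S (\<lambda>y. (B * Bi) * (1 / a y))"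
    proof (rule hk_abs_bound[OF Fai])
      show "(\<lambda>y. (B * Bi) * (1 / a y)) integrable_on S" using ainv by (rule integrable_on_mult_right)
      fix y assume "y \<in> S"
      then show "\<bar>F s y / a y\<bar> \<le> (B * Bi) * (1 / a y)"
        using FB apos[rule_format, of y] by (simp add: abs_divide divide_right_mono)
    qed
    also have "\<dots> = D" unfolding D_def Ai_def by (rule integral_mult_right)
    finally show ?thesis using e by simp
  qed
  define s1 where "s1 = - D / Ai"
  define s2 where "s2 = (2 * m + D) / Ai"
  have s12: "s1 \<le> s2" using D0 Aipos m unfolding s1_def s2_def by (simp add: field_simps)
  have U1: "U s1 L \<le> m" using UL[of s1] Aipos m unfolding s1_def by simp
  have U2: "m \<le> U s2 L" using UL[of s2] Aipos m unfolding s2_def by simp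
  obtain s0 where s0: "U s0 L = m"
    using IVT'[of "\<lambda>s. U s L" s1 m s2] U1 U2 s12 continuous_on_subset[OF Us] by blast
  define u where "u = U s0"
  define H where "H y = s0 + F s0 y" for y
  define v where "v = (\<lambda>y. H y / a y)"
  define f where "f t = b t * gh (u t)" for t
  have fc': "continuous_on S f" unfolding f_def u_def using fc .
  have fi': "f integrable_on S" unfolding f_def u_def using fi .
  have uS: "u x = -m + integral {-L..x} v" if "x \<in> S" for x
    using Ueq[of x s0] that unfolding u_def v_def H_def F_def S_def by simp
  have um: "u (-L) = -m" using uS[of "-L"] L S_def by simp
  have uL: "u L = m" using s0 u_def by simp
  have Hc: "continuous_on S H" unfolding H_def using Fc by (intro continuous_intros)
  have vc: "continuous_on S v" unfolding v_def
    using Hc continuous_on_subset[OF ac] apos by (intro continuous_intros) (auto simp: less_imp_neq[symmetric])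
  have vi: "v integrable_on S" unfolding S_def by (rule integrable_continuous_real) (use vc S_def in simp)
  have v2i: "(\<lambda>x. (v x)\<^sup>2) integrable_on S" unfolding S_def
    by (rule integrable_continuous_real) (use vc S_def in \<open>auto intro: continuous_intros\<close>)
  have Fd: "H y2 - H y1 = integral {y1..y2} f" if "y1 \<in> S" "y2 \<in> S" "y1 \<le> y2" for y1 y2
  proof -
    have "integral {-L..y1} f + integral {y1..y2} f = integral {-L..y2} f"
      using Henstock_Kurzweil_Integration.integral_combine[of "-L" y1 y2 f] that S_def
        integrable_subinterval_real[OF fi'[unfolded S_def], of "-L" y2] by auto
    then show ?thesis unfolding H_def F_def f_def u_def by simp
  qed
  have ueq1: "u x = u (-L) + integral {-L..x} (\<lambda>y. H y / a y)" if "x \<in> {-L..L}" for x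
    using uS[of x] um that S_def v_def by simp
  have upper: "\<forall>x\<in>{-L..L}. u x \<le> R"
  proof (rule maxp[of "-L" L u H a R])
    show "- L \<le> L" using L by simp
    show "continuous_on {- L..L} H" using Hc S_def by simp
    show "continuous_on {- L..L} a" using ac continuous_on_subset by blast
    show "u (- L) \<le> R" "u L \<le> R" using um uL m mR by auto
    fix y1 y2 assume y: "- L \<le> y1" "y1 \<le> y2" "y2 \<le> L" and R: "\<forall>y\<in>{y1..y2}. R \<le> u y"
    have "0 \<le> integral {y1..y2} f"
    proof (rule Henstock_Kurzweil_Integration.integral_nonneg)
      show "f integrable_on {y1..y2}" using fi' y S_def integrable_subinterval_real[of f "-L" L y1 y2] by auto
      fix t assume t: "t \<in> {y1..y2}"
      then have "clampL R (u t) = R" using R R0 unfolding clampL_def by auto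
      then show "0 \<le> f t" unfolding f_def gh_def using gR bpos[rule_format, of t] by simp
    qed
    then show "H y1 \<le> H y2" using Fd[of y1 y2] y S_def by simp
  qed (use apos in \<open>auto intro: ueq1\<close>)
  have lower: "\<forall>x\<in>{-L..L}. - u x \<le> R"
  proof (rule maxp[of "-L" L "\<lambda>x. - u x" "\<lambda>y. - H y" a R])
    show "- L \<le> L" using L by simp
    show "continuous_on {- L..L} (\<lambda>y. - H y)" using Hc S_def by (intro continuous_intros) simp
    show "continuous_on {- L..L} a" using ac continuous_on_subset by blast
    show "- u (- L) \<le> R" "- u L \<le> R" using um uL m mR by auto
    show "- u x = - u (- L) + integral {- L..x} (\<lambda>y. - H y / a y)" if "x \<in> {-L..L}" for x
      using ueq1[OF that] by simp
    fix y1 y2 assume y: "- L \<le> y1" "y1 \<le> y2" "y2 \<le> L" and R: "\<forall>y\<in>{y1..y2}. R \<le> - u y"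
    have "integral {y1..y2} f \<le> 0"
    proof -
      have "integral {y1..y2} f \<le> integral {y1..y2} (\<lambda>_. 0::real)"
      proof (rule integral_le)
        show "f integrable_on {y1..y2}" using fi' y S_def integrable_subinterval_real[of f "-L" L y1 y2] by auto
        fix t assume t: "t \<in> {y1..y2}"
        then have "clampL R (u t) = - R" using R R0 unfolding clampL_def by force
        then show "f t \<le> 0" unfolding f_def gh_def using gmR bpos[rule_format, of t]
          by (simp add: mult_nonneg_nonpos less_imp_le)
      qed auto
      then show ?thesis by simp
    qed
    then show "- H y1 \<le> - H y2" using Fd[of y1 y2] y S_def by simp
  qed (use apos in auto)
  have gu: "gh (u x) = g (u x)" if "x \<in> S" for x
  proof -
    have "clampL R (u x) = u x" using upper lower that S_def unfolding clampL_def by force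
    then show ?thesis unfolding gh_def by simp
  qed
  have H1: "H1_deriv L u v"
    unfolding H1_deriv_def
  proof (intro conjI ballI)
    show "v integrable_on {-L..L}" using vi S_def by simp
    show "(\<lambda>x. (v x)\<^sup>2) integrable_on {-L..L}" using v2i S_def by simp
    fix x assume x: "x \<in> {-L..L}"
    have "v integrable_on {-L..x}" using vi x S_def integrable_subinterval_real[of v "-L" L "-L" x] by auto
    then show "(v has_integral (u x - u (-L))) {-L..x}" using uS[of x] um x S_def by (simp add: integrable_integral)
  qed
  show ?thesis
  proof (intro exI conjI allI impI)
    show "H1m L m u" unfolding H1m_def H1_def using H1 um uL by blast
    show "H1_deriv L u v" by (rule H1)
    fix \<phi> \<psi> assume tst: "H1_deriv L \<phi> \<psi> \<and> \<phi> (- L) = 0 \<and> \<phi> L = 0"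
    have psiai: "\<psi> absolutely_integrable_on {-L..L}" using H1_deriv_abs tst by blast
    have psii: "\<psi> integrable_on {-L..L}" using tst H1_deriv_def by auto
    have phidef: "\<phi> x = integral {-L..x} \<psi>" if "x \<in> {-L..L}" for x
    proof -
      have "(\<psi> has_integral (\<phi> x - \<phi> (-L))) {-L..x}" using tst that unfolding H1_deriv_def by blast
      then show ?thesis using tst by (simp add: integral_unique)
    qed
    have "((\<lambda>x. F s0 x * \<psi> x + f x * \<phi> x) has_integral F s0 L * \<phi> L) {-L..L}"
      by (rule ibp_indef[OF _ _ _ psiai phidef])
        (use L fc' S_def in \<open>auto simp: F_def f_def u_def\<close>)
    then have i1: "((\<lambda>x. F s0 x * \<psi> x + f x * \<phi> x) has_integral 0) {-L..L}" using tst by simp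
    have LL: "L \<in> {-L..L}" using L by simp
    have "(\<psi> has_integral (\<phi> L - \<phi> (-L))) {-L..L}" using tst LL unfolding H1_deriv_def by blast
    then have "((\<lambda>x. s0 * \<psi> x) has_integral s0 * (\<phi> L - \<phi> (-L))) {-L..L}" by (rule has_integral_mult_right)
    then have "((\<lambda>x. s0 * \<psi> x) has_integral 0) {-L..L}" using tst by simp
    from has_integral_add[OF this i1]
    have i2: "((\<lambda>x. s0 * \<psi> x + (F s0 x * \<psi> x + f x * \<phi> x)) has_integral 0) {-L..L}" by simp
    show "((\<lambda>x. a x * v x * \<psi> x + b x * g (u x) * \<phi> x) has_integral 0) {-L..L}"
    proof (rule has_integral_eq[OF _ i2])
      fix x assume x: "x \<in> {-L..L}"
      have "a x * v x = H x" using apos[rule_format, of x] unfolding v_def by simp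
      then show "s0 * \<psi> x + (F s0 x * \<psi> x + f x * \<phi> x) = a x * v x * \<psi> x + b x * g (u x) * \<phi> x"
        unfolding f_def H_def using gu[of x] x S_def by (simp add: algebra_simps)
    qed
  qed
qed

theorem proposition6p8:
  fixes a b G :: "real \<Rightarrow> real" and M :: real
  assumes a_pos: "\<forall>x. a x > 0" and b_pos: "\<forall>x. b x > 0"
    and a_even: "\<forall>x. a (-x) = a x" and b_even: "\<forall>x. b (-x) = b x"
    and a_C1: "a C1_differentiable_on UNIV" and b_C1: "b C1_differentiable_on UNIV"
    and a_inv_L1: "integrable lborel (\<lambda>x. 1 / a x)" and b_L1: "integrable lborel b"
    and G_diff: "\<forall>s. G differentiable (at s)"
    and G'_diff: "\<forall>s. deriv G differentiable (at s)"
    and G''_cont: "continuous_on UNIV (deriv (deriv G))"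
    and G_nonneg: "\<forall>s. G s \<ge> 0" and G_even: "\<forall>s. G (-s) = G s"
    and M_pos: "M > 0"
    and G'_neg: "\<forall>s. s < -M \<longrightarrow> deriv G s \<le> 0"
    and G'_pos: "\<forall>s. s > M \<longrightarrow> deriv G s \<ge> 0"
    and cond1: "1 / (16 * (\<integral>x. \<bar>1 / a x\<bar> \<partial>lborel) * (\<integral>x. \<bar>b x\<bar> \<partial>lborel))
                  \<ge> - deriv (deriv G) 0"
    and cond2: "\<forall>s. s \<noteq> 0 \<longrightarrow> - deriv (deriv G) 0 > - deriv (deriv G) s"
  shows "\<forall>L>0. \<forall>m>0. \<exists>u. critical_point a b G L m u \<and>
           (\<forall>w. critical_point a b G L m w \<longrightarrow> (\<forall>x\<in>{-L..L}. w x = u x))"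
proof (intro allI impI)
  fix L m :: real assume L: "L > 0" and m: "m > 0"
  define g where "g = deriv G"
  define g2 where "g2 = deriv (deriv G)"
  have der: "\<And>s. DERIV g s :> g2 s"
    using G'_diff DERIV_deriv_iff_real_differentiable unfolding g_def g2_def by blast
  have gc: "continuous_on UNIV g" using der by (meson DERIV_isCont continuous_at_imp_continuous_on)
  have g2c: "continuous_on UNIV g2" using G''_cont g2_def by simp
  have ac: "continuous_on UNIV a"
    using a_C1 unfolding C1_differentiable_on_eq
    by (meson continuous_at_imp_continuous_on differentiable_imp_continuous_within UNIV_I)
  have bc: "continuous_on UNIV b"
    using b_C1 unfolding C1_differentiable_on_eq
    by (meson continuous_at_imp_continuous_on differentiable_imp_continuous_within UNIV_I)
  define R where "R = max m M + 1"
  have R: "m \<le> R" "M < R" "0 \<le> R" using m M_pos by (auto simp: R_def)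
  have gR: "0 \<le> g R" using G'_pos R unfolding g_def by auto
  have gmR: "g (-R) \<le> 0" using G'_neg R unfolding g_def by auto
  obtain K where K0: "K \<ge> 0" and gK: "\<forall>z w. \<bar>g (clampL R z) - g (clampL R w)\<bar> \<le> K * \<bar>z - w\<bar>"
    using g_clamp_facts(1)[OF der g2c R(3)] by blast
  obtain B where gB: "\<forall>z. \<bar>g (clampL R z)\<bar> \<le> B"
    using g_clamp_facts(2)[OF der g2c R(3)] by blast
  obtain u v where Hu: "H1m L m u" and Hv: "H1_deriv L u v"
    and equ: "\<forall>\<phi> \<psi>. H1_deriv L \<phi> \<psi> \<and> \<phi> (-L) = 0 \<and> \<phi> L = 0 \<longrightarrow>
           ((\<lambda>x. a x * v x * \<psi> x + b x * g (u x) * \<phi> x) has_integral 0) {-L..L}"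
    using existence_part[OF L m R(1) a_pos ac b_pos bc gc gR gmR K0 gK gB] by blast
  have g2ge: "g2 0 \<le> g2 s" for s using cond2 by (cases "s = 0") (auto simp: g2_def)
  have incr: "g2 0 * (x - y) \<le> g x - g y" if "y \<le> x" for x y
  proof -
    have "(\<lambda>t. g t - g2 0 * t) y \<le> (\<lambda>t. g t - g2 0 * t) x"
    proof (rule DERIV_nonneg_imp_nondecreasing[OF that])
      fix t show "\<exists>d. ((\<lambda>t. g t - g2 0 * t) has_real_derivative d) (at t) \<and> 0 \<le> d"
        using der[of t] g2ge[of t] by (intro exI[of _ "g2 t - g2 0"]) (auto intro!: derivative_eq_intros)
    qed
    then show ?thesis by (simp add: algebra_simps)
  qed
  have mono: "\<And>x y. (g x - g y) * (x - y) \<ge> - (- g2 0) * (x - y)\<^sup>2"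
  proof -
    fix x y :: real
    show "(g x - g y) * (x - y) \<ge> - (- g2 0) * (x - y)\<^sup>2"
    proof (cases "y \<le> x")
      case True
      have "g2 0 * (x - y) * (x - y) \<le> (g x - g y) * (x - y)"
        using incr[OF True] True by (intro mult_right_mono) auto
      then show ?thesis by (simp add: power2_eq_square mult.assoc)
    next
      case False
      then have le: "x \<le> y" by simp
      have "g2 0 * (y - x) * (y - x) \<le> (g y - g x) * (y - x)"
        using incr[OF le] le by (intro mult_right_mono) auto
      then show ?thesis by (simp add: power2_eq_square algebra_simps)
    qed
  qed
  have small: "- g2 0 \<le> 0 \<or> (- g2 0) * integral {-L..L} (\<lambda>x. 1 / a x) * integral {-L..L} b < 4"
  proof (cases "- g2 0 \<le> 0")
    case False
    define lam where "lam = - g2 0"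
    have lpos: "0 < lam" using False lam_def by simp
    define A' where "A' = (\<integral>x. \<bar>1 / a x\<bar> \<partial>lborel)"
    define B' where "B' = (\<integral>x. \<bar>b x\<bar> \<partial>lborel)"
    define Ai where "Ai = integral {-L..L} (\<lambda>x. 1 / a x)"
    define Bi where "Bi = integral {-L..L} b"
    have c1: "lam \<le> 1 / (16 * A' * B')" using cond1 unfolding lam_def A'_def B'_def g2_def by simp
    have AB: "0 < 16 * A' * B'"
    proof (rule ccontr)
      assume "\<not> 0 < 16 * A' * B'"
      then have "16 * A' * B' \<le> 0" by simp
      then have "1 / (16 * A' * B') \<le> 0" by (simp add: divide_nonneg_nonpos)
      then show False using c1 lpos by linarith
    qed
    have "lam * (16 * A' * B') \<le> 1" using c1 AB by (simp add: le_divide_eq)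
    have AiA: "Ai \<le> A'" unfolding Ai_def A'_def by (rule hk_le_lborel[OF a_inv_L1])
    have BiB: "Bi \<le> B'" unfolding Bi_def B'_def by (rule hk_le_lborel[OF b_L1])
    have ainvc: "continuous_on {-L..L} (\<lambda>x. 1 / a x)"
      using continuous_on_subset[OF ac] a_pos by (intro continuous_intros) (auto simp: less_imp_neq[symmetric])
    have Ai0: "0 \<le> Ai" unfolding Ai_def
      using integrable_continuous_real[OF ainvc] a_pos
      by (intro Henstock_Kurzweil_Integration.integral_nonneg) (auto simp: less_imp_le)
    have Bi0: "0 \<le> Bi" unfolding Bi_def
      using integrable_continuous_real[OF continuous_on_subset[OF bc, of "{-L..L}"]] b_pos
      by (intro Henstock_Kurzweil_Integration.integral_nonneg) (auto simp: less_imp_le)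
    have "Ai * Bi \<le> A' * B'" using AiA BiB Ai0 Bi0 by (intro mult_mono) auto
    then have "lam * (Ai * Bi) \<le> lam * (A' * B')" using lpos by (intro mult_left_mono) auto
    also have "\<dots> \<le> 1 / 16" using \<open>lam * (16 * A' * B') \<le> 1\<close> by simp
    finally have "lam * Ai * Bi < 4" by (simp add: mult.assoc)
    then show ?thesis unfolding lam_def Ai_def Bi_def by simp
  qed simp
  show "\<exists>u. critical_point a b G L m u \<and>
           (\<forall>w. critical_point a b G L m w \<longrightarrow> (\<forall>x\<in>{-L..L}. w x = u x))"
  proof (intro exI conjI allI impI)
    show "critical_point a b G L m u"
      unfolding critical_point_def using Hu Hv equ unfolding g_def by blast
    fix w assume cw: "critical_point a b G L m w"
    then obtain vw where Hw: "H1_deriv L w vw" and eqw: "\<forall>\<phi> \<psi>. H1_deriv L \<phi> \<psi> \<and> \<phi> (-L) = 0 \<and> \<phi> L = 0 \<longrightarrow>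
           ((\<lambda>x. a x * vw x * \<psi> x + b x * g (w x) * \<phi> x) has_integral 0) {-L..L}"
      unfolding critical_point_def g_def by blast
    have bw: "w (-L) = -m" "w L = m" using cw unfolding critical_point_def H1m_def by auto
    have bu: "u (-L) = -m" "u L = m" using Hu unfolding H1m_def by auto
    show "\<forall>x\<in>{-L..L}. w x = u x"
      by (rule weak_uniq[OF L a_pos b_pos ac bc gc mono small Hv Hw _ _ equ eqw]) (use bu bw in auto)
  qed
qed

end
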